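(* Let $p\in(0,1)$ and let $X$, $\gamma$, $(\mathcal Z,\pi)$ satisfy the standing assumptions described in the context. Then: (i) if $\mathrm{ess\text{-}sup}\,\gamma\le \frac1{1-p}$, $\mathrm{ES}_p$ is robust at $X$ relative to $(\mathcal G_{\rm cm},\mathcal Z,\pi)$; (ii) if $0\le x_0<\mathbb E[\gamma X]$ and either $\gamma$ is constant or ($\gamma$ is continuous and $\gamma(X)$ is continuously distributed), then $\mathrm{ES}_p$ is robust at $X$ relative to $(\mathcal G_{\rm ns},L^q,\pi^q)$ for every $q\in[1,\infty]$, where $\pi^q(Y,Z)=\|Y-Z\|_q$; (iii) if $0\le x_0<m$ and either $\gamma$ is constant or ($\gamma$ is continuous and $\gamma(X)$ is continuously distributed), then $\mathrm{ES}_p$ is robust at $X$ relative to $(\mathcal G_{\rm bd},\mathcal Z,\pi)$.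
   Context: $(\Omega,\mathcal F,\mathbb P)$ is an atomless probability space; $L^0$, $L^q$, $L^\infty$ are the usual spaces of a.s. finite, $q$-integrable, essentially bounded random variables. For $p\in(0,1)$, $\mathrm{VaR}_p(Y)=\inf\{x:\mathbb P(Y\le x)\ge p\}$ and $\mathrm{ES}_p(Y)=\frac1{1-p}\int_p^1\mathrm{VaR}_u(Y)\,\mathrm du$ (possibly $+\infty$). Standing assumptions: $X\ge0$ is a random variable whose distribution has a positive density on its support; $\gamma:\mathbb R\to\mathbb R$ is continuous and strictly positive, and (identifying $\gamma$ with $\gamma(X)$) $\mathbb E[\gamma]=1$, $\mathbb E[\gamma X]<\infty$. $(\mathcal Z,\pi)$ is one of: $(L^\infty,\|\cdot-\cdot\|_\infty)$; $(L^q,\|\cdot-\cdot\|_q)$ for $q\in[1,\infty)$; $(L^0,\pi^W)$ with $\pi^W(Y,Z)$ the Prokhorov distance between the laws of $Y,Z$; and $X\in\mathcal Z$. $\mathcal G_1$ is the set of measurable functions $\mathbb R\to\mathbb R$; $x_0\in\mathbb R$, $m>0$; $\mathcal G_{\rm cm}=\{g\in\mathcal G_1:\mathbb E[\gamma g(X)]\ge x_0\}$, $\mathcal G_{\rm ns}=\{g\in\mathcal G_1:\mathbb E[\gamma g(X)]\ge x_0,\ 0\le g(X)\le X\}$, $\mathcal G_{\rm bd}=\{g\in\mathcal G_1:\mathbb E[\gamma g(X)]\ge x_0,\ 0\le g(X)\le m\}$. For an admissible set $\mathcal G$ and objective $\rho$, $\mathcal G_X(\rho)=\{g\in\mathcal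 G:\rho(g(X))=\inf_{h\in\mathcal G}\rho(h(X))\}$. $\rho$ is robust at $X$ relative to $(\mathcal G,\mathcal Z,\pi)$ if there exists $g_X\in\mathcal G_X(\rho)$ such that $\mathcal Z\ni Y\mapsto\rho(g_X(Y))$ is $\pi$-continuous at $Y=X$. *)

theory Defs
  imports "HOL-Probability.Probability" "HOL-Probability.Essential_Supremum"
begin

definition atomless :: "'a measure \<Rightarrow> bool" where
  "atomless M \<longleftrightarrow> (\<forall>A\<in>sets M. measure M A > 0 \<longrightarrow>
      (\<exists>B\<in>sets M. B \<subseteq> A \<and> 0 < measure M B \<and> measure M B < measure M A))"

definition VaR :: "'a measure \<Rightarrow> real \<Rightarrow> ('a \<Rightarrow> real) \<Rightarrow> real" where
  "VaR M u Y = Inf {x::real. measure M {\<omega>\<in>space M. Y \<omega> \<le> x} \<ge> u}"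

text \<open>Expected Shortfall ES_p(Y) = 1/(1-p) * integral over (p,1) of VaR_u(Y) du,
  as an extended real (possibly +\<infinity>); positive and negative parts are integrated
  separately (the negative part is always finite for p in (0,1)).\<close>
definition ES :: "'a measure \<Rightarrow> real \<Rightarrow> ('a \<Rightarrow> real) \<Rightarrow> ereal" where
  "ES M p Y =
     (enn2ereal (\<integral>\<^sup>+ u. indicator {p<..<1} u * ennreal (VaR M u Y) \<partial>lborel)
      - enn2ereal (\<integral>\<^sup>+ u. indicator {p<..<1} u * ennreal (- VaR M u Y) \<partial>lborel))
     / ereal (1 - p)"

definition L0 :: "'a measure \<Rightarrow> ('a \<Rightarrow> real) set" where
  "L0 M = borel_measurable M"

definition Linf :: "'a measure \<Rightarrow> ('a \<Rightarrow> real) set" where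
  "Linf M = {Y \<in> borel_measurable M. \<exists>C. AE \<omega> in M. \<bar>Y \<omega>\<bar> \<le> C}"

definition Lq :: "'a measure \<Rightarrow> real \<Rightarrow> ('a \<Rightarrow> real) set" where
  "Lq M q = {Y \<in> borel_measurable M. integrable M (\<lambda>\<omega>. \<bar>Y \<omega>\<bar> powr q)}"

definition dist_inf :: "'a measure \<Rightarrow> ('a \<Rightarrow> real) \<Rightarrow> ('a \<Rightarrow> real) \<Rightarrow> real" where
  "dist_inf M Y Z = real_of_ereal (esssup M (\<lambda>\<omega>. ereal \<bar>Y \<omega> - Z \<omega>\<bar>))"

definition dist_q :: "'a measure \<Rightarrow> real \<Rightarrow> ('a \<Rightarrow> real) \<Rightarrow> ('a \<Rightarrow> real) \<Rightarrow> real" where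
  "dist_q M q Y Z = (\<integral>\<omega>. \<bar>Y \<omega> - Z \<omega>\<bar> powr q \<partial>M) powr (1 / q)"

definition prokhorov :: "real measure \<Rightarrow> real measure \<Rightarrow> real" where
  "prokhorov \<mu> \<nu> = Inf {\<epsilon>. \<epsilon> > 0 \<and>
      (\<forall>A\<in>sets borel.
         measure \<mu> A \<le> measure \<nu> (\<Union>a\<in>A. ball a \<epsilon>) + \<epsilon> \<and>
         measure \<nu> A \<le> measure \<mu> (\<Union>a\<in>A. ball a \<epsilon>) + \<epsilon>)}"

definition dist_W :: "'a measure \<Rightarrow> ('a \<Rightarrow> real) \<Rightarrow> ('a \<Rightarrow> real) \<Rightarrow> real" where
  "dist_W M Y Z = prokhorov (distr M borel Y) (distr M borel Z)"

definition space_choice :: "'a measure \<Rightarrow> ('a \<Rightarrow> real) set \<Rightarrow>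
    (('a \<Rightarrow> real) \<Rightarrow> ('a \<Rightarrow> real) \<Rightarrow> real) \<Rightarrow> bool" where
  "space_choice M Z \<pi> \<longleftrightarrow>
     (Z = Linf M \<and> \<pi> = dist_inf M)
   \<or> (\<exists>q. 1 \<le> q \<and> Z = Lq M q \<and> \<pi> = dist_q M q)
   \<or> (Z = L0 M \<and> \<pi> = dist_W M)"

definition Lq_choice :: "'a measure \<Rightarrow> ('a \<Rightarrow> real) set \<Rightarrow>
    (('a \<Rightarrow> real) \<Rightarrow> ('a \<Rightarrow> real) \<Rightarrow> real) \<Rightarrow> bool" where
  "Lq_choice M Z \<pi> \<longleftrightarrow>
     (Z = Linf M \<and> \<pi> = dist_inf M)
   \<or> (\<exists>q. 1 \<le> q \<and> Z = Lq M q \<and> \<pi> = dist_q M q)"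

definition G_cm :: "'a measure \<Rightarrow> (real \<Rightarrow> real) \<Rightarrow> ('a \<Rightarrow> real) \<Rightarrow> real \<Rightarrow> (real \<Rightarrow> real) set" where
  "G_cm M \<gamma> X x0 = {g \<in> borel_measurable borel.
      integrable M (\<lambda>\<omega>. \<gamma> (X \<omega>) * g (X \<omega>)) \<and>
      (\<integral>\<omega>. \<gamma> (X \<omega>) * g (X \<omega>) \<partial>M) \<ge> x0}"

definition G_ns :: "'a measure \<Rightarrow> (real \<Rightarrow> real) \<Rightarrow> ('a \<Rightarrow> real) \<Rightarrow> real \<Rightarrow> (real \<Rightarrow> real) set" where
  "G_ns M \<gamma> X x0 = {g \<in> borel_measurable borel.
      integrable M (\<lambda>\<omega>. \<gamma> (X \<omega>) * g (X \<omega>)) \<and>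
      (\<integral>\<omega>. \<gamma> (X \<omega>) * g (X \<omega>) \<partial>M) \<ge> x0 \<and>
      (AE \<omega> in M. 0 \<le> g (X \<omega>) \<and> g (X \<omega>) \<le> X \<omega>)}"

definition G_bd :: "'a measure \<Rightarrow> (real \<Rightarrow> real) \<Rightarrow> ('a \<Rightarrow> real) \<Rightarrow> real \<Rightarrow> real \<Rightarrow> (real \<Rightarrow> real) set" where
  "G_bd M \<gamma> X x0 m = {g \<in> borel_measurable borel.
      integrable M (\<lambda>\<omega>. \<gamma> (X \<omega>) * g (X \<omega>)) \<and>
      (\<integral>\<omega>. \<gamma> (X \<omega>) * g (X \<omega>) \<partial>M) \<ge> x0 \<and>
      (AE \<omega> in M. 0 \<le> g (X \<omega>) \<and> g (X \<omega>) \<le> m)}"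

definition optimal_set :: "(('a \<Rightarrow> real) \<Rightarrow> ereal) \<Rightarrow> (real \<Rightarrow> real) set \<Rightarrow> ('a \<Rightarrow> real)
    \<Rightarrow> (real \<Rightarrow> real) set" where
  "optimal_set \<rho> G X = {g \<in> G. \<rho> (g \<circ> X) = (INF h\<in>G. \<rho> (h \<circ> X))}"

definition cont_at_wrt :: "('b \<Rightarrow> real) set \<Rightarrow> (('b \<Rightarrow> real) \<Rightarrow> ('b \<Rightarrow> real) \<Rightarrow> real)
    \<Rightarrow> (('b \<Rightarrow> real) \<Rightarrow> ereal) \<Rightarrow> ('b \<Rightarrow> real) \<Rightarrow> bool" where
  "cont_at_wrt Z \<pi> F X \<longleftrightarrow>
     (\<forall>S. open S \<and> F X \<in> S \<longrightarrow> (\<exists>\<delta>>0. \<forall>Y\<in>Z. \<pi> Y X < \<delta> \<longrightarrow> F Y \<in> S))"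

definition robust :: "(('a \<Rightarrow> real) \<Rightarrow> ereal) \<Rightarrow> (real \<Rightarrow> real) set \<Rightarrow> ('a \<Rightarrow> real) set
    \<Rightarrow> (('a \<Rightarrow> real) \<Rightarrow> ('a \<Rightarrow> real) \<Rightarrow> real) \<Rightarrow> ('a \<Rightarrow> real) \<Rightarrow> bool" where
  "robust \<rho> G Z \<pi> X \<longleftrightarrow>
     (\<exists>g\<in>optimal_set \<rho> G X. cont_at_wrt Z \<pi> (\<lambda>Y. \<rho> (g \<circ> Y)) X)"

definition law_support :: "'a measure \<Rightarrow> ('a \<Rightarrow> real) \<Rightarrow> real set" where
  "law_support M X = {x. \<forall>e>0. measure M {\<omega>\<in>space M. X \<omega> \<in> ball x e} > 0}"

definition pos_density_on_support :: "'a measure \<Rightarrow> ('a \<Rightarrow> real) \<Rightarrow> bool" where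
  "pos_density_on_support M X \<longleftrightarrow>
     (\<exists>f. distributed M lborel X (\<lambda>x. ennreal (f x)) \<and> (\<forall>x\<in>law_support M X. f x > 0))"

end

theory Submission
  imports Defs
begin


definition jr :: "'a measure \<Rightarrow> real \<Rightarrow> ('a \<Rightarrow> real) \<Rightarrow> real \<Rightarrow> real" where
  "jr M p Y t = t + (\<integral>\<omega>. max (Y \<omega> - t) 0 \<partial>M) / (1 - p)"

context prob_space begin

lemma cdf_distr_eq:
  assumes "Y \<in> borel_measurable M"
  shows "cdf (distr M borel Y) x = measure M {\<omega>\<in>space M. Y \<omega> \<le> x}"
  using assms by (simp add: cdf_def measure_distr vimage_def Int_def conj_commute)

lemma VaR_cdf:
  assumes "Y \<in> borel_measurable M"
  shows "VaR M u Y = Inf {x. u \<le> cdf (distr M borel Y) x}"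
  unfolding VaR_def cdf_distr_eq[OF assms] by simp

lemma VaR_galois:
  assumes "Y \<in> borel_measurable M" "0 < u" "u < 1"
  shows "u \<le> measure M {\<omega>\<in>space M. Y \<omega> \<le> x} \<longleftrightarrow> VaR M u Y \<le> x"
proof -
  interpret C: cdf_distribution "distr M borel Y"
    unfolding cdf_distribution_def using real_distribution_distr[OF assms(1)] .
  have "u \<le> cdf (distr M borel Y) x \<longleftrightarrow> Inf {x. u \<le> cdf (distr M borel Y) x} \<le> x"
    by (rule C.pseudoinverse) (use assms in auto)
  then show ?thesis
    unfolding VaR_cdf[OF assms(1)] cdf_distr_eq[OF assms(1)] .
qed

lemma VaR_mono:
  assumes "Y \<in> borel_measurable M" "0 < u" "u \<le> v" "v < 1"
  shows "VaR M u Y \<le> VaR M v Y"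
proof -
  have "v \<le> measure M {\<omega>\<in>space M. Y \<omega> \<le> VaR M v Y}"
    using VaR_galois[OF assms(1), of v "VaR M v Y"] assms by simp
  then have "u \<le> measure M {\<omega>\<in>space M. Y \<omega> \<le> VaR M v Y}" using assms by linarith
  then show ?thesis using VaR_galois[OF assms(1), of u "VaR M v Y"] assms by simp
qed

lemma QT:
  assumes Y: "Y \<in> borel_measurable M" and f: "f \<in> borel_measurable borel"
  shows "(\<integral>\<^sup>+u. indicator {0<..<1} u * f (VaR M u Y) \<partial>lborel) = (\<integral>\<^sup>+\<omega>. f (Y \<omega>) \<partial>M)"
proof -
  interpret C: cdf_distribution "distr M borel Y"
    unfolding cdf_distribution_def using real_distribution_distr[OF assms(1)] .
  let ?I = "\<lambda>\<omega>. Inf {x. \<omega> \<le> cdf (distr M borel Y) x}"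
  have "(\<integral>\<^sup>+\<omega>. f (Y \<omega>) \<partial>M) = (\<integral>\<^sup>+x. f x \<partial>distr M borel Y)"
    using Y f by (simp add: nn_integral_distr)
  also have "\<dots> = (\<integral>\<^sup>+x. f x \<partial>distr (restrict_space lborel {0<..<1::real}) borel ?I)"
    using C.distr_I_eq_M by simp
  also have "\<dots> = (\<integral>\<^sup>+u. f (?I u) \<partial>restrict_space lborel {0<..<1::real})"
    using f C.measurable_CI
    by (subst nn_integral_distr) (auto simp: measurable_restrict_space1)
  also have "\<dots> = (\<integral>\<^sup>+u. indicator {0<..<1} u * f (?I u) \<partial>lborel)"
    by (subst nn_integral_restrict_space) (auto simp: mult.commute nn_integral_set_ennreal)
  finally show ?thesis by (simp add: VaR_cdf[OF Y])
qed

lemma ennreal_add_max: "ennreal a + ennreal b = ennreal (max a 0 + max b 0)"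
proof -
  have "ennreal a = ennreal (max a 0)" "ennreal b = ennreal (max b 0)"
    by (auto simp: max_def ennreal_neg)
  then show ?thesis by (simp add: ennreal_plus)
qed

lemma ennreal_mult_max: "0 \<le> a \<Longrightarrow> ennreal a * ennreal b = ennreal (a * max b 0)"
  by (cases "b \<ge> 0") (auto simp: ennreal_mult ennreal_neg max_def)

lemma ennreal_max0: "ennreal (max a 0) = ennreal a"
  by (auto simp: max_def ennreal_neg)

lemma VaR_meas:
  assumes Y: "Y \<in> borel_measurable M"
  shows "(\<lambda>u. indicator {0<..<1::real} u *\<^sub>R VaR M u Y) \<in> borel_measurable borel"
proof -
  interpret C: cdf_distribution "distr M borel Y"
    unfolding cdf_distribution_def using real_distribution_distr[OF assms(1)] .
  have "(\<lambda>u. VaR M u Y) \<in> borel_measurable (restrict_space borel {0<..<1::real})"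
    using C.measurable_CI unfolding VaR_cdf[OF Y] .
  then show ?thesis
    by (subst (asm) borel_measurable_restrict_space_iff) auto
qed

lemma VaR_meas_ennreal:
  fixes f :: "real \<Rightarrow> ennreal"
  assumes Y: "Y \<in> borel_measurable M" and f: "f \<in> borel_measurable borel"
    and sub: "A \<subseteq> {0<..<1}" and A: "A \<in> sets borel"
  shows "(\<lambda>u. indicator A u * f (VaR M u Y)) \<in> borel_measurable borel"
proof -
  have eq: "(\<lambda>u. indicator A u * f (VaR M u Y)) =
     (\<lambda>u. indicator A u * f (indicator {0<..<1::real} u *\<^sub>R VaR M u Y))"
    using sub by (auto simp: indicator_def fun_eq_iff)
  show ?thesis unfolding eq using VaR_meas[OF Y] f A by measurable
qed

lemma ES_eq:
  assumes Y: "Y \<in> borel_measurable M" and p: "0 < p" "p < 1"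
  shows "ES M p Y = (if integrable M (\<lambda>\<omega>. max (Y \<omega> - VaR M p Y) 0)
      then ereal (jr M p Y (VaR M p Y)) else \<infinity>)"
proof -
  define t0 where "t0 = VaR M p Y"
  define P where "P = (\<integral>\<^sup>+ u. indicator {p<..<1} u * ennreal (VaR M u Y) \<partial>lborel)"
  define N where "N = (\<integral>\<^sup>+ u. indicator {p<..<1} u * ennreal (- VaR M u Y) \<partial>lborel)"
  define I where "I = (\<integral>\<^sup>+\<omega>. ennreal (Y \<omega> - t0) \<partial>M)"
  define c1 where "c1 = ennreal (1-p) * ennreal (- t0)"
  define c2 where "c2 = ennreal (1-p) * ennreal t0"
  have ge: "t0 \<le> VaR M u Y" if "u \<in> {p<..<1}" for u
    unfolding t0_def using VaR_mono[OF Y, of p u] that p by auto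
  have le: "VaR M u Y \<le> t0" if "u \<in> {0<..p}" for u
    unfolding t0_def using VaR_mono[OF Y, of u p] that p by auto
  have sub: "{p<..<1} \<subseteq> {0<..<1::real}" using p by auto
  have mP: "(\<lambda>u. indicator {p<..<1} u * ennreal (VaR M u Y)) \<in> borel_measurable borel"
    by (rule VaR_meas_ennreal[OF Y _ sub]) auto
  have mN: "(\<lambda>u. indicator {p<..<1} u * ennreal (- VaR M u Y)) \<in> borel_measurable borel"
    by (rule VaR_meas_ennreal[OF Y _ sub]) auto
  have mI: "(\<lambda>u. indicator {p<..<1} u * ennreal (VaR M u Y - t0)) \<in> borel_measurable borel"
    by (rule VaR_meas_ennreal[OF Y _ sub]) auto
  have I_eq: "I = (\<integral>\<^sup>+ u. indicator {p<..<1} u * ennreal (VaR M u Y - t0) \<partial>lborel)"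
  proof -
    have "I = (\<integral>\<^sup>+u. indicator {0<..<1} u * ennreal (VaR M u Y - t0) \<partial>lborel)"
      unfolding I_def by (rule QT[OF Y, symmetric]) auto
    also have "\<dots> = (\<integral>\<^sup>+ u. indicator {p<..<1} u * ennreal (VaR M u Y - t0) \<partial>lborel)"
    proof (rule nn_integral_cong)
      fix u :: real
      show "indicator {0<..<1} u * ennreal (VaR M u Y - t0) =
            indicator {p<..<1} u * ennreal (VaR M u Y - t0)"
        using le[of u] p by (cases "u \<in> {0<..<1}"; cases "u \<in> {p<..<1}") (auto simp: ennreal_neg)
    qed
    finally show ?thesis .
  qed
  have const: "(\<integral>\<^sup>+ u. indicator {p<..<1} u * ennreal c \<partial>lborel) = ennreal (1-p) * ennreal c" for c
    using p by (subst mult.commute) (simp add: nn_integral_cmult_indicator mult.commute)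
  have ident: "P + c1 = I + c2 + N"
  proof -
    have "P + c1 = (\<integral>\<^sup>+ u. indicator {p<..<1} u * ennreal (VaR M u Y)
                         + indicator {p<..<1} u * ennreal (- t0) \<partial>lborel)"
      unfolding P_def c1_def const[symmetric]
      by (rule nn_integral_add[symmetric]) (use mP in auto)
    also have "\<dots> = (\<integral>\<^sup>+ u. (indicator {p<..<1} u * ennreal (VaR M u Y - t0)
                         + indicator {p<..<1} u * ennreal t0)
                         + indicator {p<..<1} u * ennreal (- VaR M u Y) \<partial>lborel)"
    proof (rule nn_integral_cong)
      fix u :: real
      show "indicator {p<..<1} u * ennreal (VaR M u Y) + indicator {p<..<1} u * ennreal (- t0) =
         (indicator {p<..<1} u * ennreal (VaR M u Y - t0) + indicator {p<..<1} u * ennreal t0)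
          + indicator {p<..<1} u * ennreal (- VaR M u Y)"
      proof (cases "u \<in> {p<..<1}")
        case True
        have "ennreal (VaR M u Y) + ennreal (- t0) = ennreal (VaR M u Y - t0) + ennreal t0 + ennreal (- VaR M u Y)"
        proof -
          have e1: "ennreal (VaR M u Y) + ennreal (- t0) = ennreal (max (VaR M u Y) 0 + max (-t0) 0)"
            by (rule ennreal_add_max)
          have e2: "ennreal (VaR M u Y - t0) + ennreal t0 + ennreal (- VaR M u Y) =
             ennreal (max (max (VaR M u Y - t0) 0 + max t0 0) 0 + max (- VaR M u Y) 0)"
            by (simp only: ennreal_add_max)
          have "max (VaR M u Y) 0 + max (-t0) 0 = max (max (VaR M u Y - t0) 0 + max t0 0) 0 + max (- VaR M u Y) 0"
            using ge[OF True] by (auto simp: max_def)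
          then show ?thesis unfolding e1 e2 by simp
        qed
        then show ?thesis using True by simp
      qed simp
    qed
    also have "\<dots> = (\<integral>\<^sup>+ u. indicator {p<..<1} u * ennreal (VaR M u Y - t0)
                         + indicator {p<..<1} u * ennreal t0 \<partial>lborel) + N"
      unfolding N_def by (rule nn_integral_add) (use mI mN in auto)
    also have "\<dots> = I + c2 + N"
      unfolding I_eq c2_def const[symmetric]
      by (subst nn_integral_add) (use mI in auto)
    finally show ?thesis .
  qed
  have Nle: "N \<le> c1"
    unfolding N_def c1_def const[symmetric]
    by (rule nn_integral_mono) (use ge in \<open>auto simp: indicator_def intro!: ennreal_leI\<close>)
  have c1fin: "c1 < \<top>" "c2 < \<top>" unfolding c1_def c2_def by (auto simp: ennreal_mult_less_top)
  have Nfin: "N < \<top>" using Nle c1fin by (auto simp: top_unique)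
  have ES_def': "ES M p Y = (enn2ereal P - enn2ereal N) / ereal (1 - p)"
    unfolding ES_def P_def N_def ..
  show ?thesis
  proof (cases "integrable M (\<lambda>\<omega>. max (Y \<omega> - t0) 0)")
    case True
    have Ieq: "I = ennreal (\<integral>\<omega>. max (Y \<omega> - t0) 0 \<partial>M)"
      unfolding I_def
      by (subst nn_integral_eq_integral[symmetric]) (use True in \<open>auto intro!: nn_integral_cong simp: max_def ennreal_neg\<close>)
    define Ir where "Ir = (\<integral>\<omega>. max (Y \<omega> - t0) 0 \<partial>M)"
    have Ir0: "Ir \<ge> 0" unfolding Ir_def by (rule integral_nonneg_AE) auto
    have Pfin: "P < \<top>"
    proof -
      have "P \<le> P + c1" by simp
      also have "\<dots> < \<top>" unfolding ident using Nfin c1fin Ieq by (simp add: ennreal_add_less_top)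
      finally show ?thesis .
    qed
    obtain Pr where Pr: "P = ennreal Pr" "Pr \<ge> 0" using Pfin by (cases P) auto
    obtain Nr where Nr: "N = ennreal Nr" "Nr \<ge> 0" using Nfin by (cases N) auto
    have "ennreal (Pr + (1-p) * max (-t0) 0) = ennreal (Ir + (1-p) * max t0 0 + Nr)"
    proof -
      have a1: "ennreal (1-p) * ennreal (-t0) = ennreal ((1-p) * max (-t0) 0)"
        by (rule ennreal_mult_max) (use p in auto)
      have a2: "ennreal (1-p) * ennreal t0 = ennreal ((1-p) * max t0 0)"
        by (rule ennreal_mult_max) (use p in auto)
      have nn: "0 \<le> (1-p) * max (-t0) 0" "0 \<le> (1-p) * max t0 0" using p by auto
      have b1: "ennreal Pr + ennreal ((1-p)*max(-t0) 0) = ennreal (Pr + (1-p)*max(-t0) 0)"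
        by (rule ennreal_plus[symmetric]) (use nn Pr in auto)
      have b2: "ennreal Ir + ennreal ((1-p)*max t0 0) = ennreal (Ir + (1-p)*max t0 0)"
        by (rule ennreal_plus[symmetric]) (use nn Ir0 in auto)
      have b3: "ennreal (Ir + (1-p)*max t0 0) + ennreal Nr = ennreal (Ir + (1-p)*max t0 0 + Nr)"
        by (rule ennreal_plus[symmetric]) (use nn Ir0 Nr in auto)
      show ?thesis
        using ident unfolding Pr Nr Ieq c1_def c2_def Ir_def[symmetric] a1 a2 b1 b2 b3 .
    qed
    then have "Pr + (1-p) * max (-t0) 0 = Ir + (1-p) * max t0 0 + Nr"
      using p Ir0 Pr Nr by (subst (asm) ennreal_inj) auto
    then have "Pr - Nr = Ir + (1-p) * t0" by (auto simp: max_def algebra_simps split: if_splits)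
    then have "ES M p Y = ereal ((Ir + (1-p) * t0) / (1-p))"
      unfolding ES_def' Pr Nr using Pr Nr p by simp
    also have "(Ir + (1-p) * t0) / (1-p) = jr M p Y t0"
      unfolding jr_def Ir_def using p by (simp add: field_simps)
    finally show ?thesis using True unfolding t0_def by simp
  next
    case False
    have "I = \<top>"
    proof (rule ccontr)
      assume "I \<noteq> \<top>"
      have "integrable M (\<lambda>\<omega>. max (Y \<omega> - t0) 0)"
      proof (rule integrableI_nonneg)
        show "(\<lambda>\<omega>. max (Y \<omega> - t0) 0) \<in> borel_measurable M" using Y by measurable
        show "AE x in M. 0 \<le> max (Y x - t0) 0" by simp
        show "(\<integral>\<^sup>+ x. ennreal (max (Y x - t0) 0) \<partial>M) < \<infinity>"
          unfolding ennreal_max0 I_def[symmetric] using \<open>I \<noteq> \<top>\<close> by (simp add: top.not_eq_extremum)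
      qed
      with False show False by simp
    qed
    then have "P = \<top>" using ident c1fin by (auto simp: top_add)
    then have "ES M p Y = \<infinity>" unfolding ES_def' using Nfin p by simp
    then show ?thesis using False unfolding t0_def by simp
  qed
qed

lemma posint_shift:
  fixes Y :: "'a \<Rightarrow> real"
  assumes Y: "Y \<in> borel_measurable M" and i: "integrable M (\<lambda>\<omega>. max (Y \<omega> - s) 0)"
  shows "integrable M (\<lambda>\<omega>. max (Y \<omega> - t) 0)"
proof -
  have 1: "integrable M (\<lambda>\<omega>. max (Y \<omega> - s) 0 + \<bar>t - s\<bar>)" using i by simp
  have 2: "(\<lambda>\<omega>. max (Y \<omega> - t) 0) \<in> borel_measurable M" using Y by measurable
  have 3: "AE \<omega> in M. norm (max (Y \<omega> - t) 0) \<le> norm (max (Y \<omega> - s) 0 + \<bar>t - s\<bar>)"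
    by (auto simp: max_def)
  show ?thesis by (rule Bochner_Integration.integrable_bound[OF 1 2 3])
qed

lemma prob_le_VaR:
  assumes Y: "Y \<in> borel_measurable M" and p: "0 < p" "p < 1"
  shows "p \<le> prob {\<omega>\<in>space M. Y \<omega> \<le> VaR M p Y}"
  using VaR_galois[OF Y p, of "VaR M p Y"] by simp

lemma prob_less_VaR:
  assumes Y: "Y \<in> borel_measurable M" and p: "0 < p" "p < 1"
  shows "prob {\<omega>\<in>space M. Y \<omega> < VaR M p Y} \<le> p"
proof -
  define t0 where "t0 = VaR M p Y"
  define A where "A = (\<lambda>n::nat. {\<omega>\<in>space M. Y \<omega> \<le> t0 - 1 / real (Suc n)})"
  have Am: "range A \<subseteq> events" unfolding A_def using Y by auto
  have inc: "incseq A"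
  proof (rule incseq_SucI)
    fix n
    have "1 / real (Suc (Suc n)) \<le> 1 / real (Suc n)"
      by (rule divide_left_mono) auto
    then show "A n \<subseteq> A (Suc n)" unfolding A_def by auto
  qed
  have U: "(\<Union>n. A n) = {\<omega>\<in>space M. Y \<omega> < t0}"
  proof (auto simp: A_def)
    fix \<omega> assume "\<omega> \<in> space M" "Y \<omega> < t0"
    then obtain n where "1 / real (Suc n) < t0 - Y \<omega>"
      by (metis diff_gt_0_iff_gt nat_approx_posE)
    then show "\<exists>n. Y \<omega> \<le> t0 - 1 / (1 + real n)" by (intro exI[of _ n]) auto
  next
    fix \<omega> n assume "Y \<omega> \<le> t0 - 1 / (1 + real n)"
    moreover have "0 < 1 / (1 + real n)" by simp
    ultimately show "Y \<omega> < t0" by linarith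
  qed
  have lt: "prob (A n) < p" for n
  proof (rule ccontr)
    assume "\<not> prob (A n) < p"
    then have "p \<le> prob {\<omega>\<in>space M. Y \<omega> \<le> t0 - 1 / real (Suc n)}" unfolding A_def by simp
    then have "t0 \<le> t0 - 1 / real (Suc n)" using VaR_galois[OF Y p] unfolding t0_def by blast
    then show False by simp
  qed
  have "(\<lambda>n. prob (A n)) \<longlonglongrightarrow> prob (\<Union>n. A n)"
    by (rule finite_Lim_measure_incseq[OF Am inc])
  then have "prob (\<Union>n. A n) \<le> p"
    by (rule LIMSEQ_le_const2) (use lt less_imp_le in auto)
  then show ?thesis unfolding U t0_def .
qed

lemma jr_min:
  assumes Y: "Y \<in> borel_measurable M" and p: "0 < p" "p < 1"
    and i: "integrable M (\<lambda>\<omega>. max (Y \<omega> - VaR M p Y) 0)"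
  shows "jr M p Y (VaR M p Y) \<le> jr M p Y t"
proof -
  define t0 where "t0 = VaR M p Y"
  have i0: "integrable M (\<lambda>\<omega>. max (Y \<omega> - t0) 0)" using i unfolding t0_def .
  have it: "integrable M (\<lambda>\<omega>. max (Y \<omega> - t) 0)" by (rule posint_shift[OF Y i0])
  have key: "(\<integral>\<omega>. max (Y \<omega> - t0) 0 \<partial>M) \<le> (\<integral>\<omega>. max (Y \<omega> - t) 0 \<partial>M) + (t - t0) * (1 - p)"
  proof (cases "t0 \<le> t")
    case True
    let ?B = "{\<omega>\<in>space M. t0 < Y \<omega>}"
    have Bm: "?B \<in> events" using Y by auto
    have "?B = space M - {\<omega>\<in>space M. Y \<omega> \<le> t0}" by auto
    then have "prob ?B = 1 - prob {\<omega>\<in>space M. Y \<omega> \<le> t0}"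
      using prob_compl[of "{\<omega>\<in>space M. Y \<omega> \<le> t0}"] Y by simp
    then have PB: "prob ?B \<le> 1 - p" using prob_le_VaR[OF Y p] unfolding t0_def by simp
    have isum: "integrable M (\<lambda>\<omega>. max (Y \<omega> - t) 0 + (t - t0) * indicator ?B \<omega>)"
      using it Bm by (intro Bochner_Integration.integrable_add integrable_mult_right integrable_real_indicator) (auto simp: less_top[symmetric])
    have "(\<integral>\<omega>. max (Y \<omega> - t0) 0 \<partial>M) \<le> (\<integral>\<omega>. max (Y \<omega> - t) 0 + (t - t0) * indicator ?B \<omega> \<partial>M)"
      by (rule integral_mono[OF i0 isum]) (use True in \<open>auto simp: indicator_def max_def\<close>)
    also have "\<dots> = (\<integral>\<omega>. max (Y \<omega> - t) 0 \<partial>M) + (t - t0) * prob ?B"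
      using it Bm by (subst Bochner_Integration.integral_add) (auto simp: less_top[symmetric])
    also have "\<dots> \<le> (\<integral>\<omega>. max (Y \<omega> - t) 0 \<partial>M) + (t - t0) * (1 - p)"
      using PB True by (simp add: mult_left_mono)
    finally show ?thesis .
  next
    case False
    let ?B = "{\<omega>\<in>space M. t0 \<le> Y \<omega>}"
    have Bm: "?B \<in> events" using Y by auto
    have "?B = space M - {\<omega>\<in>space M. Y \<omega> < t0}" by auto
    then have "prob ?B = 1 - prob {\<omega>\<in>space M. Y \<omega> < t0}"
      using prob_compl[of "{\<omega>\<in>space M. Y \<omega> < t0}"] Y by simp
    then have PB: "1 - p \<le> prob ?B" using prob_less_VaR[OF Y p] unfolding t0_def by simp
    have "(\<integral>\<omega>. max (Y \<omega> - t0) 0 \<partial>M) + (t0 - t) * (1 - p) \<le> (\<integral>\<omega>. max (Y \<omega> - t0) 0 \<partial>M) + (t0 - t) * prob ?B"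
      using PB False by (simp add: mult_left_mono)
    also have "\<dots> = (\<integral>\<omega>. max (Y \<omega> - t0) 0 + (t0 - t) * indicator ?B \<omega> \<partial>M)"
      using i0 Bm by (subst Bochner_Integration.integral_add) (auto simp: less_top[symmetric])
    also have "\<dots> \<le> (\<integral>\<omega>. max (Y \<omega> - t) 0 \<partial>M)"
    proof (rule integral_mono[OF _ it])
      show "integrable M (\<lambda>\<omega>. max (Y \<omega> - t0) 0 + (t0 - t) * indicator ?B \<omega>)"
        using i0 Bm by (intro Bochner_Integration.integrable_add integrable_mult_right integrable_real_indicator) (auto simp: less_top[symmetric])
    qed (use False in \<open>auto simp: indicator_def max_def\<close>)
    finally show ?thesis by (simp add: algebra_simps)
  qed
  have d1: "(\<integral>\<omega>. max (Y \<omega> - t0) 0 \<partial>M) / (1-p) \<le> ((\<integral>\<omega>. max (Y \<omega> - t) 0 \<partial>M) + (t - t0) * (1 - p)) / (1-p)"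
    by (rule divide_right_mono) (use key p in auto)
  have d2: "((\<integral>\<omega>. max (Y \<omega> - t) 0 \<partial>M) + (t - t0) * (1 - p)) / (1-p) = (\<integral>\<omega>. max (Y \<omega> - t) 0 \<partial>M) / (1-p) + (t - t0)"
    using p by (simp add: add_divide_distrib)
  have "jr M p Y t0 \<le> jr M p Y t"
    unfolding jr_def using d1 d2 by linarith
  then show ?thesis unfolding t0_def .
qed

definition posint :: "'a measure \<Rightarrow> ('a \<Rightarrow> real) \<Rightarrow> bool" where
  "posint N Y \<longleftrightarrow> integrable N (\<lambda>\<omega>. max (Y \<omega>) 0)"

lemma posint_iff:
  assumes Y: "Y \<in> borel_measurable M"
  shows "posint M Y \<longleftrightarrow> integrable M (\<lambda>\<omega>. max (Y \<omega> - t) 0)"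
  using posint_shift[OF Y, of 0 t] posint_shift[OF Y, of t 0] unfolding posint_def by auto

lemma ES_posint:
  assumes Y: "Y \<in> borel_measurable M" and p: "0 < p" "p < 1" and P: "posint M Y"
  shows "ES M p Y = ereal (jr M p Y (VaR M p Y))"
  using ES_eq[OF Y p] posint_iff[OF Y] P by simp

lemma ES_not_posint:
  assumes Y: "Y \<in> borel_measurable M" and p: "0 < p" "p < 1" and P: "\<not> posint M Y"
  shows "ES M p Y = \<infinity>"
  using ES_eq[OF Y p] posint_iff[OF Y] P by simp

lemma ES_le_jr:
  assumes Y: "Y \<in> borel_measurable M" and p: "0 < p" "p < 1" and P: "posint M Y"
  shows "ES M p Y \<le> ereal (jr M p Y t)"
  using ES_posint[OF Y p P] jr_min[OF Y p] posint_iff[OF Y] P by simp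

lemma ES_compare:
  assumes A: "A \<in> borel_measurable M" and B: "B \<in> borel_measurable M" and p: "0 < p" "p < 1"
    and PA: "posint M A" and PB: "posint M B"
    and le: "\<And>t. jr M p A t \<le> jr M p B t + e"
  shows "ES M p A \<le> ES M p B + ereal e"
proof -
  have "ES M p A \<le> ereal (jr M p A (VaR M p B))" by (rule ES_le_jr[OF A p PA])
  also have "\<dots> \<le> ereal (jr M p B (VaR M p B) + e)" using le by simp
  also have "\<dots> = ES M p B + ereal e" using ES_posint[OF B p PB] by simp
  finally show ?thesis .
qed

lemma dual_bound:
  assumes Y: "Y \<in> borel_measurable M" and p: "0 < p" "p < 1"
    and xi: "\<xi> \<in> borel_measurable M" "integrable M \<xi>" "(\<integral>\<omega>. \<xi> \<omega> \<partial>M) = 1"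
    and xib: "AE \<omega> in M. 0 \<le> \<xi> \<omega> \<and> \<xi> \<omega> \<le> 1 / (1 - p)"
    and xiY: "integrable M (\<lambda>\<omega>. \<xi> \<omega> * Y \<omega>)"
    and P: "posint M Y"
  shows "(\<integral>\<omega>. \<xi> \<omega> * Y \<omega> \<partial>M) \<le> jr M p Y t"
proof -
  have it: "integrable M (\<lambda>\<omega>. max (Y \<omega> - t) 0)" using P posint_iff[OF Y] by simp
  have i2: "integrable M (\<lambda>\<omega>. \<xi> \<omega> * max (Y \<omega> - t) 0)"
  proof (rule Bochner_Integration.integrable_bound)
    show "integrable M (\<lambda>\<omega>. max (Y \<omega> - t) 0 / (1 - p))" using it by simp
    show "(\<lambda>\<omega>. \<xi> \<omega> * max (Y \<omega> - t) 0) \<in> borel_measurable M" using xi Y by measurable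
    show "AE \<omega> in M. norm (\<xi> \<omega> * max (Y \<omega> - t) 0) \<le> norm (max (Y \<omega> - t) 0 / (1 - p))"
      using xib
    proof eventually_elim
      case (elim \<omega>)
      then have "\<xi> \<omega> * max (Y \<omega> - t) 0 \<le> 1 / (1 - p) * max (Y \<omega> - t) 0"
        by (intro mult_right_mono) auto
      then show ?case using elim p by (simp add: abs_mult)
    qed
  qed
  have "(\<integral>\<omega>. \<xi> \<omega> * Y \<omega> \<partial>M) = (\<integral>\<omega>. t * \<xi> \<omega> + \<xi> \<omega> * (Y \<omega> - t) \<partial>M)"
    by (rule Bochner_Integration.integral_cong) (auto simp: algebra_simps)
  also have "\<dots> = t + (\<integral>\<omega>. \<xi> \<omega> * (Y \<omega> - t) \<partial>M)"
  proof -
    have "integrable M (\<lambda>\<omega>. \<xi> \<omega> * (Y \<omega> - t))"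
      using xiY xi by (simp add: right_diff_distrib)
    then show ?thesis using xi by (simp add: Bochner_Integration.integral_add)
  qed
  also have "(\<integral>\<omega>. \<xi> \<omega> * (Y \<omega> - t) \<partial>M) \<le> (\<integral>\<omega>. \<xi> \<omega> * max (Y \<omega> - t) 0 \<partial>M)"
  proof (rule integral_mono_AE)
    show "integrable M (\<lambda>\<omega>. \<xi> \<omega> * (Y \<omega> - t))"
      using xiY xi by (simp add: right_diff_distrib)
    show "integrable M (\<lambda>\<omega>. \<xi> \<omega> * max (Y \<omega> - t) 0)" by (rule i2)
    show "AE \<omega> in M. \<xi> \<omega> * (Y \<omega> - t) \<le> \<xi> \<omega> * max (Y \<omega> - t) 0"
      using xib by eventually_elim (auto intro: mult_left_mono)
  qed
  also have "\<dots> \<le> (\<integral>\<omega>. max (Y \<omega> - t) 0 / (1 - p) \<partial>M)"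
  proof (rule integral_mono_AE)
    show "integrable M (\<lambda>\<omega>. max (Y \<omega> - t) 0 / (1 - p))" using it by simp
    show "AE \<omega> in M. \<xi> \<omega> * max (Y \<omega> - t) 0 \<le> max (Y \<omega> - t) 0 / (1 - p)"
      using xib
    proof eventually_elim
      case (elim \<omega>)
      then have "\<xi> \<omega> * max (Y \<omega> - t) 0 \<le> 1 / (1 - p) * max (Y \<omega> - t) 0"
        by (intro mult_right_mono) auto
      then show ?case by simp
    qed
  qed (rule i2)
  also have "(\<integral>\<omega>. max (Y \<omega> - t) 0 / (1 - p) \<partial>M) = (\<integral>\<omega>. max (Y \<omega> - t) 0 \<partial>M) / (1 - p)"
    by simp
  finally show ?thesis unfolding jr_def by simp
qed

lemma VaR_nonneg:
  assumes Y: "Y \<in> borel_measurable M" and p: "0 < p" "p < 1" and nn: "AE \<omega> in M. 0 \<le> Y \<omega>"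
  shows "0 \<le> VaR M p Y"
proof (rule ccontr)
  assume neg: "\<not> 0 \<le> VaR M p Y"
  have "AE \<omega> in M. \<not> (Y \<omega> \<le> VaR M p Y)"
    using nn by eventually_elim (use neg in auto)
  then have "prob {\<omega>\<in>space M. Y \<omega> \<le> VaR M p Y} = 0"
    by (rule prob_eq_0_AE)
  then show False using prob_le_VaR[OF Y p] p by simp
qed

end



definition Gset :: "'a measure \<Rightarrow> (real \<Rightarrow> real) \<Rightarrow> ('a \<Rightarrow> real) \<Rightarrow> real \<Rightarrow> (real \<Rightarrow> real) \<Rightarrow> (real \<Rightarrow> real) set" where
  "Gset N \<gamma> X x0 u = {g \<in> borel_measurable borel. integrable N (\<lambda>\<omega>. \<gamma> (X \<omega>) * g (X \<omega>)) \<and>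
      x0 \<le> (\<integral>\<omega>. \<gamma> (X \<omega>) * g (X \<omega>) \<partial>N) \<and> (AE \<omega> in N. 0 \<le> g (X \<omega>) \<and> g (X \<omega>) \<le> u (X \<omega>))}"

context prob_space begin

lemma part1:
  fixes X :: "'a \<Rightarrow> real" and \<gamma> :: "real \<Rightarrow> real"
  assumes p: "0 < p" "p < 1"
    and X: "X \<in> borel_measurable M"
    and \<gamma>c: "continuous_on UNIV \<gamma>" and \<gamma>p: "\<forall>x. \<gamma> x > 0"
    and \<gamma>i: "integrable M (\<lambda>\<omega>. \<gamma> (X \<omega>))" and \<gamma>1: "(\<integral>\<omega>. \<gamma> (X \<omega>) \<partial>M) = 1"
    and ess: "esssup M (\<lambda>\<omega>. ereal (\<gamma> (X \<omega>))) \<le> ereal (1 / (1 - p))"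
  shows "robust (ES M p) (G_cm M \<gamma> X x0) Z \<pi> X"
proof -
  have \<gamma>m: "\<gamma> \<in> borel_measurable borel" using \<gamma>c by (simp add: borel_measurable_continuous_onI)
  have \<gamma>Xm: "(\<lambda>\<omega>. \<gamma> (X \<omega>)) \<in> borel_measurable M" using \<gamma>m X by measurable
  define g0 where "g0 = (\<lambda>x::real. x0)"
  have g0G: "g0 \<in> G_cm M \<gamma> X x0"
    unfolding G_cm_def g0_def using \<gamma>i \<gamma>1 by auto
  have AEb: "AE \<omega> in M. 0 \<le> \<gamma> (X \<omega>) \<and> \<gamma> (X \<omega>) \<le> 1 / (1 - p)"
  proof -
    have "AE \<omega> in M. ereal (\<gamma> (X \<omega>)) \<le> esssup M (\<lambda>\<omega>. ereal (\<gamma> (X \<omega>)))"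
      by (rule esssup_AE)
    then show ?thesis
    proof eventually_elim
      case (elim \<omega>)
      then have "ereal (\<gamma> (X \<omega>)) \<le> ereal (1 / (1 - p))" using ess by (rule order_trans)
      then show ?case using \<gamma>p less_imp_le by auto
    qed
  qed
  have lower: "ereal x0 \<le> ES M p (h \<circ> X)" if h: "h \<in> G_cm M \<gamma> X x0" for h
  proof -
    have hm: "h \<in> borel_measurable borel" and hi: "integrable M (\<lambda>\<omega>. \<gamma> (X \<omega>) * h (X \<omega>))"
      and hx: "x0 \<le> (\<integral>\<omega>. \<gamma> (X \<omega>) * h (X \<omega>) \<partial>M)"
      using h unfolding G_cm_def by auto
    have hXm: "h \<circ> X \<in> borel_measurable M" using hm X by measurable
    show ?thesis
    proof (cases "posint M (h \<circ> X)")
      case True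
      have "(\<integral>\<omega>. \<gamma> (X \<omega>) * (h \<circ> X) \<omega> \<partial>M) \<le> jr M p (h \<circ> X) (VaR M p (h \<circ> X))"
        by (rule dual_bound[OF hXm p \<gamma>Xm \<gamma>i \<gamma>1 AEb]) (use hi True in auto)
      then have "x0 \<le> jr M p (h \<circ> X) (VaR M p (h \<circ> X))" using hx by simp
      then show ?thesis using ES_posint[OF hXm p True] by simp
    next
      case False
      then show ?thesis using ES_not_posint[OF hXm p False] by simp
    qed
  qed
  have ES0: "ES M p (g0 \<circ> X) = ereal x0"
  proof (rule antisym)
    have m: "g0 \<circ> X \<in> borel_measurable M" unfolding g0_def by simp
    have P: "posint M (g0 \<circ> X)" unfolding posint_def g0_def by simp
    have "ES M p (g0 \<circ> X) \<le> ereal (jr M p (g0 \<circ> X) x0)" by (rule ES_le_jr[OF m p P])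
    also have "jr M p (g0 \<circ> X) x0 = x0" unfolding jr_def g0_def by simp
    finally show "ES M p (g0 \<circ> X) \<le> ereal x0" .
    show "ereal x0 \<le> ES M p (g0 \<circ> X)" by (rule lower[OF g0G])
  qed
  have opt: "g0 \<in> optimal_set (ES M p) (G_cm M \<gamma> X x0) X"
    unfolding optimal_set_def
  proof (intro CollectI conjI g0G antisym)
    show "ES M p (g0 \<circ> X) \<le> (INF h\<in>G_cm M \<gamma> X x0. ES M p (h \<circ> X))"
      unfolding ES0 by (rule INF_greatest) (rule lower)
    show "(INF h\<in>G_cm M \<gamma> X x0. ES M p (h \<circ> X)) \<le> ES M p (g0 \<circ> X)"
      by (rule INF_lower[OF g0G])
  qed
  have cont: "cont_at_wrt Z \<pi> (\<lambda>Y. ES M p (g0 \<circ> Y)) X"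
    unfolding cont_at_wrt_def
  proof (intro allI impI)
    fix S assume "open S \<and> ES M p (g0 \<circ> X) \<in> S"
    then have "ES M p (g0 \<circ> X) \<in> S" by simp
    then show "\<exists>\<delta>>0. \<forall>Y\<in>Z. \<pi> Y X < \<delta> \<longrightarrow> ES M p (g0 \<circ> Y) \<in> S"
      by (intro exI[of _ "1::real"]) (auto simp: g0_def comp_def)
  qed
  show ?thesis unfolding robust_def using opt cont by blast
qed

lemma int_dom:
  fixes f g :: "'a \<Rightarrow> real"
  assumes "integrable M g" "f \<in> borel_measurable M" "AE x in M. \<bar>f x\<bar> \<le> g x"
  shows "integrable M f"
proof (rule Bochner_Integration.integrable_bound[OF assms(1,2)])
  show "AE x in M. norm (f x) \<le> norm (g x)" using assms(3) by eventually_elim auto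
qed

lemma knap_opt:
  fixes G W W' :: "'a \<Rightarrow> real"
  assumes Gm: "G \<in> borel_measurable M" and Gp: "\<forall>\<omega>\<in>space M. 0 < G \<omega>"
    and Wm: "W \<in> borel_measurable M" and W0: "\<forall>\<omega>\<in>space M. 0 \<le> W \<omega>"
    and Wi: "integrable M W" and GWi: "integrable M (\<lambda>\<omega>. G \<omega> * W \<omega>)"
    and c: "0 \<le> c"
    and W'm: "W' \<in> borel_measurable M" and W'b: "AE \<omega> in M. 0 \<le> W' \<omega> \<and> W' \<omega> \<le> W \<omega>"
    and ge: "(\<integral>\<omega>. G \<omega> * (W \<omega> * indicator {c<..} (G \<omega>)) \<partial>M) \<le> (\<integral>\<omega>. G \<omega> * W' \<omega> \<partial>M)"
  shows "(\<integral>\<omega>. W \<omega> * indicator {c<..} (G \<omega>) \<partial>M) \<le> (\<integral>\<omega>. W' \<omega> \<partial>M)"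
proof -
  define Z where "Z = (\<lambda>\<omega>. W \<omega> * indicator {c<..} (G \<omega>))"
  have Zm: "Z \<in> borel_measurable M" unfolding Z_def using Wm Gm by measurable
  have Zi: "integrable M Z"
    by (rule int_dom[OF Wi Zm]) (use AE_space in eventually_elim, use W0 in \<open>auto simp: Z_def indicator_def\<close>)
  have W'i: "integrable M W'"
    by (rule int_dom[OF Wi W'm]) (use W'b in auto)
  have GZi: "integrable M (\<lambda>\<omega>. G \<omega> * Z \<omega>)"
  proof (rule int_dom[OF GWi])
    show "(\<lambda>\<omega>. G \<omega> * Z \<omega>) \<in> borel_measurable M" using Gm Zm by measurable
    show "AE x in M. \<bar>G x * Z x\<bar> \<le> G x * W x"
      using AE_space by eventually_elim (use W0 Gp in \<open>auto simp: Z_def indicator_def abs_mult\<close>)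
  qed
  have GW'i: "integrable M (\<lambda>\<omega>. G \<omega> * W' \<omega>)"
  proof (rule int_dom[OF GWi])
    show "(\<lambda>\<omega>. G \<omega> * W' \<omega>) \<in> borel_measurable M" using Gm W'm by measurable
    show "AE x in M. \<bar>G x * W' x\<bar> \<le> G x * W x"
      using W'b AE_space
    proof eventually_elim
      case (elim x)
      then show ?case using Gp by (auto simp: abs_mult intro!: mult_left_mono)
    qed
  qed
  have ge': "(\<integral>\<omega>. G \<omega> * Z \<omega> \<partial>M) \<le> (\<integral>\<omega>. G \<omega> * W' \<omega> \<partial>M)" using ge unfolding Z_def .
  have "0 \<le> (\<integral>\<omega>. (W' \<omega> - Z \<omega>) * (c - G \<omega>) \<partial>M)"
  proof (rule integral_nonneg_AE)
    show "AE \<omega> in M. 0 \<le> (W' \<omega> - Z \<omega>) * (c - G \<omega>)"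
      using W'b AE_space
    proof eventually_elim
      case (elim \<omega>)
      show ?case
      proof (cases "c < G \<omega>")
        case True
        then show ?thesis using elim by (auto simp: Z_def intro!: mult_nonpos_nonpos)
      next
        case False
        then show ?thesis using elim by (auto simp: Z_def)
      qed
    qed
  qed
  also have "(\<integral>\<omega>. (W' \<omega> - Z \<omega>) * (c - G \<omega>) \<partial>M) =
      c * (\<integral>\<omega>. W' \<omega> \<partial>M) - c * (\<integral>\<omega>. Z \<omega> \<partial>M) - ((\<integral>\<omega>. G \<omega> * W' \<omega> \<partial>M) - (\<integral>\<omega>. G \<omega> * Z \<omega> \<partial>M))"
  proof -
    have "(\<integral>\<omega>. (W' \<omega> - Z \<omega>) * (c - G \<omega>) \<partial>M) =
       (\<integral>\<omega>. (c * W' \<omega> - c * Z \<omega>) - (G \<omega> * W' \<omega> - G \<omega> * Z \<omega>) \<partial>M)"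
      by (rule Bochner_Integration.integral_cong) (auto simp: algebra_simps)
    also have "\<dots> = c * (\<integral>\<omega>. W' \<omega> \<partial>M) - c * (\<integral>\<omega>. Z \<omega> \<partial>M) - ((\<integral>\<omega>. G \<omega> * W' \<omega> \<partial>M) - (\<integral>\<omega>. G \<omega> * Z \<omega> \<partial>M))"
      using W'i Zi GW'i GZi by simp
    finally show ?thesis .
  qed
  finally have main: "(\<integral>\<omega>. G \<omega> * W' \<omega> \<partial>M) - (\<integral>\<omega>. G \<omega> * Z \<omega> \<partial>M) \<le> c * ((\<integral>\<omega>. W' \<omega> \<partial>M) - (\<integral>\<omega>. Z \<omega> \<partial>M))"
    by (simp add: algebra_simps)
  show ?thesis
  proof (cases "c = 0")
    case False
    then have "0 < c" using c by simp
    have "0 \<le> c * ((\<integral>\<omega>. W' \<omega> \<partial>M) - (\<integral>\<omega>. Z \<omega> \<partial>M))" using main ge' by linarith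
    then have "0 \<le> (\<integral>\<omega>. W' \<omega> \<partial>M) - (\<integral>\<omega>. Z \<omega> \<partial>M)" using \<open>0 < c\<close> by (simp add: zero_le_mult_iff)
    then show ?thesis unfolding Z_def by simp
  next
    case True
    have ZW: "\<forall>\<omega>\<in>space M. Z \<omega> = W \<omega>" using Gp True by (auto simp: Z_def)
    have iD: "integrable M (\<lambda>\<omega>. G \<omega> * (W \<omega> - W' \<omega>))"
      using GWi GW'i by (simp add: right_diff_distrib)
    have "(\<integral>\<omega>. G \<omega> * Z \<omega> \<partial>M) = (\<integral>\<omega>. G \<omega> * W \<omega> \<partial>M)"
      by (rule Bochner_Integration.integral_cong) (use ZW in auto)
    then have "(\<integral>\<omega>. G \<omega> * (W \<omega> - W' \<omega>) \<partial>M) \<le> 0"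
      using ge' GWi GW'i by (simp add: right_diff_distrib)
    moreover have nn: "AE \<omega> in M. 0 \<le> G \<omega> * (W \<omega> - W' \<omega>)"
      using W'b AE_space by eventually_elim (use Gp in auto)
    moreover have "0 \<le> (\<integral>\<omega>. G \<omega> * (W \<omega> - W' \<omega>) \<partial>M)"
      by (rule integral_nonneg_AE[OF nn])
    ultimately have "(\<integral>\<omega>. G \<omega> * (W \<omega> - W' \<omega>) \<partial>M) = 0" by simp
    then have "AE \<omega> in M. G \<omega> * (W \<omega> - W' \<omega>) = 0"
      using integral_nonneg_eq_0_iff_AE[OF iD nn] by simp
    then have "AE \<omega> in M. Z \<omega> = W' \<omega>"
      using AE_space by eventually_elim (use Gp ZW in auto)
    then have "(\<integral>\<omega>. Z \<omega> \<partial>M) = (\<integral>\<omega>. W' \<omega> \<partial>M)"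
      by (rule integral_cong_AE[OF Zm W'm])
    then show ?thesis unfolding Z_def by simp
  qed
qed

lemma knap_cont:
  fixes G W :: "'a \<Rightarrow> real"
  assumes Gm: "G \<in> borel_measurable M" and Gp: "\<forall>\<omega>\<in>space M. 0 < G \<omega>"
    and Wm: "W \<in> borel_measurable M" and W0: "\<forall>\<omega>\<in>space M. 0 \<le> W \<omega>"
    and GWi: "integrable M (\<lambda>\<omega>. G \<omega> * W \<omega>)"
    and atoml: "\<forall>c. prob {\<omega>\<in>space M. G \<omega> = c} = 0"
    and \<tau>: "0 < \<tau>" "\<tau> \<le> (\<integral>\<omega>. G \<omega> * W \<omega> \<partial>M)"
  shows "\<exists>c\<ge>0. (\<integral>\<omega>. G \<omega> * (W \<omega> * indicator {c<..} (G \<omega>)) \<partial>M) = \<tau>"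
proof -
  define k where "k = (\<lambda>c. \<integral>\<omega>. G \<omega> * (W \<omega> * indicator {c<..} (G \<omega>)) \<partial>M)"
  have bnd: "AE \<omega> in M. norm (G \<omega> * (W \<omega> * indicator {c<..} (G \<omega>))) \<le> G \<omega> * W \<omega>" for c
    using AE_space by eventually_elim (use Gp W0 in \<open>auto simp: indicator_def abs_mult\<close>)
  have meas: "(\<lambda>\<omega>. G \<omega> * (W \<omega> * indicator {c<..} (G \<omega>))) \<in> borel_measurable M" for c
    using Gm Wm by measurable
  have k0: "k 0 = (\<integral>\<omega>. G \<omega> * W \<omega> \<partial>M)"
    unfolding k_def by (rule Bochner_Integration.integral_cong) (use Gp in auto)
  have cont: "continuous_on {0..b} k" for b
  proof (rule continuous_on_sequentiallyI)
    fix u :: "nat \<Rightarrow> real" and a assume u: "u \<longlonglongrightarrow> a"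
    have AEa: "AE \<omega> in M. G \<omega> \<noteq> a"
    proof -
      have "emeasure M {\<omega>\<in>space M. G \<omega> = a} = 0"
        using atoml emeasure_eq_measure by simp
      then show ?thesis
        by (subst AE_iff_measurable[of "{\<omega>\<in>space M. G \<omega> = a}"]) (use Gm in auto)
    qed
    show "(\<lambda>n. k (u n)) \<longlonglongrightarrow> k a"
      unfolding k_def
    proof (rule integral_dominated_convergence[where w="\<lambda>\<omega>. G \<omega> * W \<omega>"])
      show "AE \<omega> in M. (\<lambda>n. G \<omega> * (W \<omega> * indicator {u n<..} (G \<omega>))) \<longlonglongrightarrow> G \<omega> * (W \<omega> * indicator {a<..} (G \<omega>))"
        using AEa
      proof eventually_elim
        case (elim \<omega>)
        show ?case
        proof (cases "a < G \<omega>")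
          case True
          have "eventually (\<lambda>n. u n < G \<omega>) sequentially" using order_tendstoD(2)[OF u True] .
          then have "eventually (\<lambda>n. G \<omega> * (W \<omega> * indicator {u n<..} (G \<omega>)) = G \<omega> * (W \<omega> * indicator {a<..} (G \<omega>))) sequentially"
            by eventually_elim (use True in auto)
          then show ?thesis by (rule tendsto_eventually)
        next
          case False
          then have lt: "G \<omega> < a" using elim by simp
          have "eventually (\<lambda>n. G \<omega> < u n) sequentially" using order_tendstoD(1)[OF u lt] .
          then have "eventually (\<lambda>n. G \<omega> * (W \<omega> * indicator {u n<..} (G \<omega>)) = G \<omega> * (W \<omega> * indicator {a<..} (G \<omega>))) sequentially"
            by eventually_elim (use lt in auto)
          then show ?thesis by (rule tendsto_eventually)
        qed
      qed
    qed (use meas bnd GWi in auto)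
  qed
  have "(\<lambda>n. k (real n)) \<longlonglongrightarrow> 0"
  proof -
    have "(\<lambda>n. k (real n)) \<longlonglongrightarrow> (\<integral>\<omega>. 0 \<partial>M)"
      unfolding k_def
    proof (rule integral_dominated_convergence[where w="\<lambda>\<omega>. G \<omega> * W \<omega>"])
      show "AE \<omega> in M. (\<lambda>n. G \<omega> * (W \<omega> * indicator {real n<..} (G \<omega>))) \<longlonglongrightarrow> 0"
      proof (rule AE_I2)
        fix \<omega>
        obtain N where N: "G \<omega> < real N" using reals_Archimedean2 by blast
        have "eventually (\<lambda>n. G \<omega> * (W \<omega> * indicator {real n<..} (G \<omega>)) = 0) sequentially"
          unfolding eventually_sequentially
          by (rule exI[of _ N]) (use N in \<open>auto simp: indicator_def\<close>)
        then show "(\<lambda>n. G \<omega> * (W \<omega> * indicator {real n<..} (G \<omega>))) \<longlonglongrightarrow> 0"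
          by (rule tendsto_eventually)
      qed
    qed (use meas bnd GWi in auto)
    then show ?thesis by simp
  qed
  then have "eventually (\<lambda>n. k (real n) < \<tau>) sequentially"
    using order_tendstoD(2) \<tau>(1) by blast
  then obtain N where N: "k (real N) < \<tau>" unfolding eventually_sequentially by auto
  obtain c where c: "0 \<le> c" "c \<le> real N" "k c = \<tau>"
    using IVT2'[of k "real N" \<tau> 0, OF _ _ _ cont] N \<tau> k0 by auto
  then show ?thesis unfolding k_def by blast
qed

lemma knap_step:
  fixes X :: "'a \<Rightarrow> real" and \<gamma> u :: "real \<Rightarrow> real"
  assumes X: "X \<in> borel_measurable M"
    and \<gamma>m: "\<gamma> \<in> borel_measurable borel" and \<gamma>p: "\<forall>x. \<gamma> x > 0"
    and \<gamma>i: "integrable M (\<lambda>\<omega>. \<gamma> (X \<omega>))" and \<gamma>1: "(\<integral>\<omega>. \<gamma> (X \<omega>) \<partial>M) = 1"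
    and um: "u \<in> borel_measurable borel" and u0: "\<forall>\<omega>\<in>space M. 0 \<le> u (X \<omega>)"
    and ui: "integrable M (\<lambda>\<omega>. u (X \<omega>))" and \<gamma>ui: "integrable M (\<lambda>\<omega>. \<gamma> (X \<omega>) * u (X \<omega>))"
    and x0: "x0 \<le> (\<integral>\<omega>. \<gamma> (X \<omega>) * u (X \<omega>) \<partial>M)"
    and dich: "(\<forall>x y. \<gamma> x = \<gamma> y) \<or> (\<forall>c. prob {\<omega>\<in>space M. \<gamma> (X \<omega>) = c} = 0)"
    and t: "0 \<le> t"
  shows "\<exists>c s. 0 \<le> c \<and> 0 \<le> s \<and> s \<le> 1 \<and> prob {\<omega>\<in>space M. \<gamma> (X \<omega>) = c} = 0 \<and>
     x0 \<le> (\<integral>\<omega>. \<gamma> (X \<omega>) * min (u (X \<omega>)) t \<partial>M)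
        + (\<integral>\<omega>. \<gamma> (X \<omega>) * (s * max (u (X \<omega>) - t) 0 * indicator {c<..} (\<gamma> (X \<omega>))) \<partial>M) \<and>
     (\<forall>W'. W' \<in> borel_measurable M \<longrightarrow> (AE \<omega> in M. 0 \<le> W' \<omega> \<and> W' \<omega> \<le> max (u (X \<omega>) - t) 0) \<longrightarrow>
        x0 \<le> (\<integral>\<omega>. \<gamma> (X \<omega>) * min (u (X \<omega>)) t \<partial>M) + (\<integral>\<omega>. \<gamma> (X \<omega>) * W' \<omega> \<partial>M) \<longrightarrow>
        (\<integral>\<omega>. s * max (u (X \<omega>) - t) 0 * indicator {c<..} (\<gamma> (X \<omega>)) \<partial>M) \<le> (\<integral>\<omega>. W' \<omega> \<partial>M))"
proof -
  define G where "G = (\<lambda>\<omega>. \<gamma> (X \<omega>))"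
  define W where "W = (\<lambda>\<omega>. max (u (X \<omega>) - t) 0)"
  define m0 where "m0 = (\<integral>\<omega>. \<gamma> (X \<omega>) * min (u (X \<omega>)) t \<partial>M)"
  have Gm: "G \<in> borel_measurable M" unfolding G_def using X \<gamma>m by measurable
  have Gp: "\<forall>\<omega>\<in>space M. 0 < G \<omega>" unfolding G_def using \<gamma>p by auto
  have Wm: "W \<in> borel_measurable M" unfolding W_def using X um by measurable
  have W0: "\<forall>\<omega>\<in>space M. 0 \<le> W \<omega>" unfolding W_def by auto
  have Wi: "integrable M W"
    by (rule int_dom[OF ui Wm]) (use AE_space in eventually_elim, use u0 t in \<open>auto simp: W_def\<close>)
  have GWi: "integrable M (\<lambda>\<omega>. G \<omega> * W \<omega>)"
  proof (rule int_dom[OF \<gamma>ui])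
    show "(\<lambda>\<omega>. G \<omega> * W \<omega>) \<in> borel_measurable M" using Gm Wm by measurable
    show "AE x in M. \<bar>G x * W x\<bar> \<le> \<gamma> (X x) * u (X x)"
      using AE_space
    proof eventually_elim
      case (elim x)
      then have a: "max (u (X x) - t) 0 \<le> u (X x)" using u0 t by auto
      have "0 < \<gamma> (X x)" using \<gamma>p by auto
      then show ?case using a by (simp add: G_def W_def abs_mult mult_left_mono)
    qed
  qed
  have Gmi: "integrable M (\<lambda>\<omega>. \<gamma> (X \<omega>) * min (u (X \<omega>)) t)"
  proof (rule int_dom[OF \<gamma>ui])
    show "(\<lambda>\<omega>. \<gamma> (X \<omega>) * min (u (X \<omega>)) t) \<in> borel_measurable M" using X \<gamma>m um by measurable
    show "AE x in M. \<bar>\<gamma> (X x) * min (u (X x)) t\<bar> \<le> \<gamma> (X x) * u (X x)"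
      using AE_space
    proof eventually_elim
      case (elim x)
      then have a: "\<bar>min (u (X x)) t\<bar> \<le> u (X x)" using u0 t by auto
      have "0 < \<gamma> (X x)" using \<gamma>p by auto
      then show ?case using a by (simp add: abs_mult mult_left_mono)
    qed
  qed
  have split: "(\<integral>\<omega>. \<gamma> (X \<omega>) * u (X \<omega>) \<partial>M) = m0 + (\<integral>\<omega>. G \<omega> * W \<omega> \<partial>M)"
  proof -
    have "(\<integral>\<omega>. \<gamma> (X \<omega>) * u (X \<omega>) \<partial>M) = (\<integral>\<omega>. \<gamma> (X \<omega>) * min (u (X \<omega>)) t + G \<omega> * W \<omega> \<partial>M)"
      by (rule Bochner_Integration.integral_cong) (auto simp: G_def W_def max_def min_def algebra_simps)
    also have "\<dots> = m0 + (\<integral>\<omega>. G \<omega> * W \<omega> \<partial>M)"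
      unfolding m0_def using Gmi GWi by simp
    finally show ?thesis .
  qed
  have e0: "{\<omega>\<in>space M. \<gamma> (X \<omega>) = 0} = {}" using \<gamma>p by (metis (mono_tags, lifting) empty_Collect_eq less_irrefl)
  show ?thesis
  proof (cases "x0 \<le> m0")
    case True
    show ?thesis
    proof (intro exI[of _ 0] conjI allI impI)
      show "prob {\<omega>\<in>space M. \<gamma> (X \<omega>) = 0} = 0" unfolding e0 by simp
      show "x0 \<le> (\<integral>\<omega>. \<gamma> (X \<omega>) * min (u (X \<omega>)) t \<partial>M) + (\<integral>\<omega>. \<gamma> (X \<omega>) * (0 * max (u (X \<omega>) - t) 0 * indicator {0<..} (\<gamma> (X \<omega>))) \<partial>M)"
        using True unfolding m0_def by simp
      fix W' assume "AE \<omega> in M. 0 \<le> W' \<omega> \<and> W' \<omega> \<le> max (u (X \<omega>) - t) 0"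
      then have "AE \<omega> in M. 0 \<le> W' \<omega>" by auto
      then show "(\<integral>\<omega>. 0 * max (u (X \<omega>) - t) 0 * indicator {0<..} (\<gamma> (X \<omega>)) \<partial>M) \<le> (\<integral>\<omega>. W' \<omega> \<partial>M)"
        by (simp add: integral_nonneg_AE)
    qed auto
  next
    case False
    define \<tau> where "\<tau> = x0 - m0"
    have \<tau>: "0 < \<tau>" "\<tau> \<le> (\<integral>\<omega>. G \<omega> * W \<omega> \<partial>M)" using False x0 split unfolding \<tau>_def by auto
    from dich show ?thesis
    proof
      assume const: "\<forall>x y. \<gamma> x = \<gamma> y"
      have g1: "\<gamma> x = 1" for x
      proof -
        have "(\<integral>\<omega>. \<gamma> (X \<omega>) \<partial>M) = (\<integral>\<omega>. \<gamma> x \<partial>M)"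
          by (rule Bochner_Integration.integral_cong) (use const in auto)
        then show ?thesis using \<gamma>1 prob_space by simp
      qed
      have GW: "(\<integral>\<omega>. G \<omega> * W \<omega> \<partial>M) = (\<integral>\<omega>. W \<omega> \<partial>M)" unfolding G_def g1 by simp
      define s where "s = \<tau> / (\<integral>\<omega>. W \<omega> \<partial>M)"
      have Wpos: "0 < (\<integral>\<omega>. W \<omega> \<partial>M)" using \<tau> GW by simp
      have s: "0 \<le> s" "s \<le> 1" unfolding s_def using \<tau> GW Wpos by auto
      have Z: "(\<lambda>\<omega>. s * max (u (X \<omega>) - t) 0 * indicator {0<..} (\<gamma> (X \<omega>))) = (\<lambda>\<omega>. s * W \<omega>)"
        by (auto simp: W_def g1)
      have intZ: "(\<integral>\<omega>. s * W \<omega> \<partial>M) = \<tau>" unfolding s_def using Wpos by simp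
      show ?thesis
      proof (rule exI[of _ 0], rule exI[of _ s], intro conjI allI impI s)
        show "prob {\<omega>\<in>space M. \<gamma> (X \<omega>) = 0} = 0" unfolding e0 by simp
        show "x0 \<le> (\<integral>\<omega>. \<gamma> (X \<omega>) * min (u (X \<omega>)) t \<partial>M) +
          (\<integral>\<omega>. \<gamma> (X \<omega>) * (s * max (u (X \<omega>) - t) 0 * indicator {0<..} (\<gamma> (X \<omega>))) \<partial>M)"
          unfolding g1 Z using intZ unfolding \<tau>_def m0_def g1 by (simp add: W_def)
        fix W' assume "x0 \<le> (\<integral>\<omega>. \<gamma> (X \<omega>) * min (u (X \<omega>)) t \<partial>M) + (\<integral>\<omega>. \<gamma> (X \<omega>) * W' \<omega> \<partial>M)"
        then show "(\<integral>\<omega>. s * max (u (X \<omega>) - t) 0 * indicator {0<..} (\<gamma> (X \<omega>)) \<partial>M) \<le> (\<integral>\<omega>. W' \<omega> \<partial>M)"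
          unfolding Z intZ unfolding g1 \<tau>_def m0_def g1 by (simp add: W_def)
      qed simp
    next
      assume atoml: "\<forall>c. prob {\<omega>\<in>space M. \<gamma> (X \<omega>) = c} = 0"
      obtain c where c: "0 \<le> c" "(\<integral>\<omega>. G \<omega> * (W \<omega> * indicator {c<..} (G \<omega>)) \<partial>M) = \<tau>"
        using knap_cont[OF Gm Gp Wm W0 GWi _ \<tau>] atoml unfolding G_def by auto
      show ?thesis
      proof (rule exI[of _ c], rule exI[of _ 1], intro conjI allI impI c(1))
        show "prob {\<omega>\<in>space M. \<gamma> (X \<omega>) = c} = 0" using atoml by simp
        show "x0 \<le> (\<integral>\<omega>. \<gamma> (X \<omega>) * min (u (X \<omega>)) t \<partial>M) +
          (\<integral>\<omega>. \<gamma> (X \<omega>) * (1 * max (u (X \<omega>) - t) 0 * indicator {c<..} (\<gamma> (X \<omega>))) \<partial>M)"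
          using c(2) unfolding \<tau>_def m0_def G_def W_def by simp
        fix W' assume W'm: "W' \<in> borel_measurable M"
          and W'b: "AE \<omega> in M. 0 \<le> W' \<omega> \<and> W' \<omega> \<le> max (u (X \<omega>) - t) 0"
          and W'x: "x0 \<le> (\<integral>\<omega>. \<gamma> (X \<omega>) * min (u (X \<omega>)) t \<partial>M) + (\<integral>\<omega>. \<gamma> (X \<omega>) * W' \<omega> \<partial>M)"
        have "(\<integral>\<omega>. W \<omega> * indicator {c<..} (G \<omega>) \<partial>M) \<le> (\<integral>\<omega>. W' \<omega> \<partial>M)"
        proof (rule knap_opt[OF Gm Gp Wm W0 Wi GWi c(1) W'm])
          show "AE \<omega> in M. 0 \<le> W' \<omega> \<and> W' \<omega> \<le> W \<omega>" using W'b unfolding W_def .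
          show "(\<integral>\<omega>. G \<omega> * (W \<omega> * indicator {c<..} (G \<omega>)) \<partial>M) \<le> (\<integral>\<omega>. G \<omega> * W' \<omega> \<partial>M)"
            using c(2) W'x unfolding \<tau>_def m0_def G_def by simp
        qed
        then show "(\<integral>\<omega>. 1 * max (u (X \<omega>) - t) 0 * indicator {c<..} (\<gamma> (X \<omega>)) \<partial>M) \<le> (\<integral>\<omega>. W' \<omega> \<partial>M)"
          unfolding W_def G_def by simp
      qed simp_all
    qed
  qed
qed

lemma jr_lip:
  fixes Y :: "'a \<Rightarrow> real"
  assumes Y: "Y \<in> borel_measurable M" and p: "p < 1" and i: "integrable M (\<lambda>\<omega>. max (Y \<omega> - t) 0)"
  shows "jr M p Y t' \<le> jr M p Y t + (1 + 1 / (1 - p)) * \<bar>t' - t\<bar>"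
proof -
  have i': "integrable M (\<lambda>\<omega>. max (Y \<omega> - t') 0)" by (rule posint_shift[OF Y i])
  have "(\<integral>\<omega>. max (Y \<omega> - t') 0 \<partial>M) \<le> (\<integral>\<omega>. max (Y \<omega> - t) 0 + \<bar>t' - t\<bar> \<partial>M)"
    by (rule integral_mono[OF i']) (use i in \<open>auto simp: max_def\<close>)
  also have "\<dots> = (\<integral>\<omega>. max (Y \<omega> - t) 0 \<partial>M) + \<bar>t' - t\<bar>" using i prob_space by simp
  finally have a: "(\<integral>\<omega>. max (Y \<omega> - t') 0 \<partial>M) \<le> (\<integral>\<omega>. max (Y \<omega> - t) 0 \<partial>M) + \<bar>t' - t\<bar>" .
  have "(\<integral>\<omega>. max (Y \<omega> - t') 0 \<partial>M) / (1 - p) \<le> ((\<integral>\<omega>. max (Y \<omega> - t) 0 \<partial>M) + \<bar>t' - t\<bar>) / (1 - p)"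
    by (rule divide_right_mono[OF a]) (use p in auto)
  also have "\<dots> = (\<integral>\<omega>. max (Y \<omega> - t) 0 \<partial>M) / (1 - p) + 1 / (1 - p) * \<bar>t' - t\<bar>"
    by (simp add: add_divide_distrib)
  finally have b: "(\<integral>\<omega>. max (Y \<omega> - t') 0 \<partial>M) / (1 - p) \<le> (\<integral>\<omega>. max (Y \<omega> - t) 0 \<partial>M) / (1 - p) + 1 / (1 - p) * \<bar>t' - t\<bar>" .
  have "t' \<le> t + \<bar>t' - t\<bar>" by simp
  then show ?thesis using b unfolding jr_def by (simp add: algebra_simps)
qed

lemma opt_exists:
  fixes X :: "'a \<Rightarrow> real" and \<gamma> u :: "real \<Rightarrow> real"
  assumes p: "0 < p" "p < 1"
    and X: "X \<in> borel_measurable M"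
    and \<gamma>m: "\<gamma> \<in> borel_measurable borel" and \<gamma>p: "\<forall>x. \<gamma> x > 0"
    and \<gamma>i: "integrable M (\<lambda>\<omega>. \<gamma> (X \<omega>))" and \<gamma>1: "(\<integral>\<omega>. \<gamma> (X \<omega>) \<partial>M) = 1"
    and um: "u \<in> borel_measurable borel" and u0: "\<forall>\<omega>\<in>space M. 0 \<le> u (X \<omega>)"
    and ui: "integrable M (\<lambda>\<omega>. u (X \<omega>))" and \<gamma>ui: "integrable M (\<lambda>\<omega>. \<gamma> (X \<omega>) * u (X \<omega>))"
    and x0: "x0 \<le> (\<integral>\<omega>. \<gamma> (X \<omega>) * u (X \<omega>) \<partial>M)"
    and dich: "(\<forall>x y. \<gamma> x = \<gamma> y) \<or> (\<forall>c. prob {\<omega>\<in>space M. \<gamma> (X \<omega>) = c} = 0)"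
  shows "\<exists>t s c. 0 \<le> t \<and> 0 \<le> s \<and> s \<le> 1 \<and> prob {\<omega>\<in>space M. \<gamma> (X \<omega>) = c} = 0 \<and>
     (\<lambda>x. min (u x) t + s * max (u x - t) 0 * indicator {c<..} (\<gamma> x)) \<in> optimal_set (ES M p) (Gset M \<gamma> X x0 u) X"
proof -
  define Q where "Q = (\<lambda>t c s. 0 \<le> c \<and> 0 \<le> s \<and> s \<le> 1 \<and> prob {\<omega>\<in>space M. \<gamma> (X \<omega>) = c} = 0 \<and>
     x0 \<le> (\<integral>\<omega>. \<gamma> (X \<omega>) * min (u (X \<omega>)) t \<partial>M)
        + (\<integral>\<omega>. \<gamma> (X \<omega>) * (s * max (u (X \<omega>) - t) 0 * indicator {c<..} (\<gamma> (X \<omega>))) \<partial>M) \<and>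
     (\<forall>W'. W' \<in> borel_measurable M \<longrightarrow> (AE \<omega> in M. 0 \<le> W' \<omega> \<and> W' \<omega> \<le> max (u (X \<omega>) - t) 0) \<longrightarrow>
        x0 \<le> (\<integral>\<omega>. \<gamma> (X \<omega>) * min (u (X \<omega>)) t \<partial>M) + (\<integral>\<omega>. \<gamma> (X \<omega>) * W' \<omega> \<partial>M) \<longrightarrow>
        (\<integral>\<omega>. s * max (u (X \<omega>) - t) 0 * indicator {c<..} (\<gamma> (X \<omega>)) \<partial>M) \<le> (\<integral>\<omega>. W' \<omega> \<partial>M)))"
  have exQ: "\<exists>c s. Q t c s" if "0 \<le> t" for t
    unfolding Q_def by (rule knap_step[OF X \<gamma>m \<gamma>p \<gamma>i \<gamma>1 um u0 ui \<gamma>ui x0 dich that])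
  define cc where "cc t = (SOME c. \<exists>s. Q t c s)" for t
  define ss where "ss t = (SOME s. Q t (cc t) s)" for t
  have Qt: "Q t (cc t) (ss t)" if "0 \<le> t" for t
  proof -
    have "\<exists>s. Q t (cc t) s" unfolding cc_def by (rule someI_ex) (rule exQ[OF that])
    then show ?thesis unfolding ss_def by (rule someI_ex)
  qed
  define Zf where "Zf t \<omega> = ss t * max (u (X \<omega>) - t) 0 * indicator {cc t<..} (\<gamma> (X \<omega>))" for t \<omega>
  define gt where "gt t = (\<lambda>x. min (u x) t + ss t * max (u x - t) 0 * indicator {cc t<..} (\<gamma> x))" for t
  define V where "V t = jr M p (gt t \<circ> X) t" for t
  have \<gamma>Xm: "(\<lambda>\<omega>. \<gamma> (X \<omega>)) \<in> borel_measurable M" using \<gamma>m X by measurable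
  have uXm: "(\<lambda>\<omega>. u (X \<omega>)) \<in> borel_measurable M" using um X by measurable
  have Zfm: "Zf t \<in> borel_measurable M" for t unfolding Zf_def using \<gamma>m um X by measurable
  have gtm: "gt t \<in> borel_measurable borel" for t unfolding gt_def using \<gamma>m um by measurable
  have gtXm: "gt t \<circ> X \<in> borel_measurable M" for t using gtm X by measurable
  have gtX: "gt t (X \<omega>) = min (u (X \<omega>)) t + Zf t \<omega>" for t \<omega> unfolding gt_def Zf_def by simp
  have Zf0: "0 \<le> Zf t \<omega>" if "0 \<le> t" for t \<omega>
    using Qt[OF that] unfolding Zf_def Q_def by (auto simp: indicator_def)
  have Zfle: "Zf t \<omega> \<le> max (u (X \<omega>) - t) 0" if "0 \<le> t" for t \<omega>
  proof -
    have "ss t \<le> 1" "0 \<le> ss t" using Qt[OF that] unfolding Q_def by auto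
    then show ?thesis unfolding Zf_def
      by (auto simp: indicator_def intro!: mult_left_le_one_le)
  qed
  have Zfu: "0 \<le> Zf t \<omega> \<and> Zf t \<omega> \<le> u (X \<omega>)" if "0 \<le> t" "\<omega> \<in> space M" for t \<omega>
  proof -
    have "Zf t \<omega> \<le> max (u (X \<omega>) - t) 0" "0 \<le> Zf t \<omega>" "0 \<le> u (X \<omega>)"
      using Zf0[OF that(1), of \<omega>] Zfle[OF that(1), of \<omega>] u0 that(2) by auto
    then show ?thesis using that(1) by (auto simp: max_def split: if_splits)
  qed
  have gtb: "0 \<le> gt t (X \<omega>) \<and> gt t (X \<omega>) \<le> u (X \<omega>)" if "0 \<le> t" "\<omega> \<in> space M" for t \<omega>
    using Zf0[OF that(1), of \<omega>] Zfle[OF that(1), of \<omega>] u0 that unfolding gtX by (auto simp: max_def min_def)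
  have intb: "integrable M f" if "f \<in> borel_measurable M" "AE \<omega> in M. \<bar>f \<omega>\<bar> \<le> \<gamma> (X \<omega>) * u (X \<omega>)" for f
    by (rule int_dom[OF \<gamma>ui that])
  have intu: "integrable M f" if "f \<in> borel_measurable M" "AE \<omega> in M. \<bar>f \<omega>\<bar> \<le> u (X \<omega>)" for f
    by (rule int_dom[OF ui that])
  have \<gamma>bnd: "\<bar>\<gamma> (X \<omega>) * a\<bar> \<le> \<gamma> (X \<omega>) * u (X \<omega>)" if "\<bar>a\<bar> \<le> u (X \<omega>)" for a \<omega>
  proof -
    have "0 < \<gamma> (X \<omega>)" using \<gamma>p by auto
    then show ?thesis using that by (simp add: abs_mult mult_left_mono)
  qed
  have intb2: "integrable M (\<lambda>\<omega>. \<gamma> (X \<omega>) * f \<omega>)"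
    if fm: "f \<in> borel_measurable M" and fb: "AE \<omega> in M. \<bar>f \<omega>\<bar> \<le> u (X \<omega>)" for f
  proof (rule intb)
    show "(\<lambda>\<omega>. \<gamma> (X \<omega>) * f \<omega>) \<in> borel_measurable M" using \<gamma>Xm fm by measurable
    show "AE \<omega> in M. \<bar>\<gamma> (X \<omega>) * f \<omega>\<bar> \<le> \<gamma> (X \<omega>) * u (X \<omega>)"
      using fb by eventually_elim (rule \<gamma>bnd)
  qed
  have F1: "gt t \<in> Gset M \<gamma> X x0 u" if t: "0 \<le> t" for t
  proof -
    have i1: "integrable M (\<lambda>\<omega>. \<gamma> (X \<omega>) * min (u (X \<omega>)) t)"
      by (rule intb2) (use uXm in measurable, use AE_space in \<open>eventually_elim, use u0 t in auto\<close>)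
    have i2: "integrable M (\<lambda>\<omega>. \<gamma> (X \<omega>) * Zf t \<omega>)"
      by (rule intb2) (use Zfm in measurable, use AE_space in \<open>eventually_elim, use Zfu[OF t] in auto\<close>)
    have eq: "(\<lambda>\<omega>. \<gamma> (X \<omega>) * gt t (X \<omega>)) = (\<lambda>\<omega>. \<gamma> (X \<omega>) * min (u (X \<omega>)) t + \<gamma> (X \<omega>) * Zf t \<omega>)"
      unfolding gtX by (simp add: algebra_simps)
    have "x0 \<le> (\<integral>\<omega>. \<gamma> (X \<omega>) * min (u (X \<omega>)) t \<partial>M) + (\<integral>\<omega>. \<gamma> (X \<omega>) * Zf t \<omega> \<partial>M)"
      using Qt[OF t] unfolding Q_def Zf_def by (simp add: mult.assoc)
    also have "\<dots> = (\<integral>\<omega>. \<gamma> (X \<omega>) * gt t (X \<omega>) \<partial>M)" unfolding eq using i1 i2 by simp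
    finally have x: "x0 \<le> (\<integral>\<omega>. \<gamma> (X \<omega>) * gt t (X \<omega>) \<partial>M)" .
    show ?thesis unfolding Gset_def
      using gtm x i1 i2 gtb[OF t] eq by (auto intro!: AE_I2)
  qed
  have posG: "posint M (h \<circ> X)" if h: "h \<in> Gset M \<gamma> X x0 u" for h
  proof -
    have hm: "h \<in> borel_measurable borel" and hb: "AE \<omega> in M. 0 \<le> h (X \<omega>) \<and> h (X \<omega>) \<le> u (X \<omega>)"
      using h unfolding Gset_def by auto
    show ?thesis unfolding posint_def
      by (rule intu) (use hm X in measurable, use hb in \<open>eventually_elim, auto\<close>)
  qed
  have Vf: "V t = t + (\<integral>\<omega>. Zf t \<omega> \<partial>M) / (1 - p)" if t: "0 \<le> t" for t
  proof -
    have "(\<integral>\<omega>. max ((gt t \<circ> X) \<omega> - t) 0 \<partial>M) = (\<integral>\<omega>. Zf t \<omega> \<partial>M)"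
    proof (rule Bochner_Integration.integral_cong)
      fix \<omega> assume "\<omega> \<in> space M"
      then show "max ((gt t \<circ> X) \<omega> - t) 0 = Zf t \<omega>"
        using Zf0[OF t, of \<omega>] Zfle[OF t, of \<omega>] unfolding comp_def gtX
        by (auto simp: max_def min_def)
    qed simp
    then show ?thesis unfolding V_def jr_def by simp
  qed
  have F2: "V t \<le> jr M p (h \<circ> X) t" if t: "0 \<le> t" and h: "h \<in> Gset M \<gamma> X x0 u" for t h
  proof -
    have hm: "h \<in> borel_measurable borel" and hi: "integrable M (\<lambda>\<omega>. \<gamma> (X \<omega>) * h (X \<omega>))"
      and hx: "x0 \<le> (\<integral>\<omega>. \<gamma> (X \<omega>) * h (X \<omega>) \<partial>M)"
      and hb: "AE \<omega> in M. 0 \<le> h (X \<omega>) \<and> h (X \<omega>) \<le> u (X \<omega>)"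
      using h unfolding Gset_def by auto
    have hXm: "(\<lambda>\<omega>. h (X \<omega>)) \<in> borel_measurable M" using hm X by measurable
    define W' where "W' = (\<lambda>\<omega>. max (h (X \<omega>) - t) 0)"
    have W'm: "W' \<in> borel_measurable M" unfolding W'_def using hXm by measurable
    have W'b: "AE \<omega> in M. 0 \<le> W' \<omega> \<and> W' \<omega> \<le> max (u (X \<omega>) - t) 0"
      using hb by eventually_elim (auto simp: W'_def max_def)
    have i1: "integrable M (\<lambda>\<omega>. \<gamma> (X \<omega>) * min (h (X \<omega>)) t)"
      by (rule intb2) (use hXm in measurable, use hb in \<open>eventually_elim, use t in auto\<close>)
    have i2: "integrable M (\<lambda>\<omega>. \<gamma> (X \<omega>) * W' \<omega>)"
      by (rule intb2) (use W'm in measurable, use hb in \<open>eventually_elim, use t in \<open>auto simp: W'_def max_def\<close>\<close>)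
    have i3: "integrable M (\<lambda>\<omega>. \<gamma> (X \<omega>) * min (u (X \<omega>)) t)"
      by (rule intb2) (use uXm in measurable, use AE_space in \<open>eventually_elim, use u0 t in auto\<close>)
    have eq: "(\<lambda>\<omega>. \<gamma> (X \<omega>) * h (X \<omega>)) = (\<lambda>\<omega>. \<gamma> (X \<omega>) * min (h (X \<omega>)) t + \<gamma> (X \<omega>) * W' \<omega>)"
      by (auto simp: W'_def max_def min_def algebra_simps)
    have "x0 \<le> (\<integral>\<omega>. \<gamma> (X \<omega>) * min (h (X \<omega>)) t \<partial>M) + (\<integral>\<omega>. \<gamma> (X \<omega>) * W' \<omega> \<partial>M)"
      using hx unfolding eq using i1 i2 by simp
    also have "(\<integral>\<omega>. \<gamma> (X \<omega>) * min (h (X \<omega>)) t \<partial>M) \<le> (\<integral>\<omega>. \<gamma> (X \<omega>) * min (u (X \<omega>)) t \<partial>M)"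
    proof (rule integral_mono_AE[OF i1 i3])
      show "AE \<omega> in M. \<gamma> (X \<omega>) * min (h (X \<omega>)) t \<le> \<gamma> (X \<omega>) * min (u (X \<omega>)) t"
        using hb by eventually_elim (rule mult_left_mono, auto, use \<gamma>p in \<open>auto intro: less_imp_le\<close>)
    qed
    finally have xx: "x0 \<le> (\<integral>\<omega>. \<gamma> (X \<omega>) * min (u (X \<omega>)) t \<partial>M) + (\<integral>\<omega>. \<gamma> (X \<omega>) * W' \<omega> \<partial>M)"
      by simp
    have "(\<integral>\<omega>. Zf t \<omega> \<partial>M) \<le> (\<integral>\<omega>. W' \<omega> \<partial>M)"
      using Qt[OF t] W'm W'b xx unfolding Q_def Zf_def by blast
    then have "(\<integral>\<omega>. Zf t \<omega> \<partial>M) / (1 - p) \<le> (\<integral>\<omega>. W' \<omega> \<partial>M) / (1 - p)"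
      by (rule divide_right_mono) (use p in auto)
    then show ?thesis unfolding Vf[OF t] jr_def W'_def comp_def by simp
  qed
  define C where "C = 1 + 1 / (1 - p)"
  have F3: "V t' \<le> V t + C * \<bar>t' - t\<bar>" if "0 \<le> t" "0 \<le> t'" for t t'
  proof -
    have "V t' \<le> jr M p (gt t \<circ> X) t'" by (rule F2[OF that(2) F1[OF that(1)]])
    also have "\<dots> \<le> jr M p (gt t \<circ> X) t + C * \<bar>t' - t\<bar>"
      unfolding C_def
    proof (rule jr_lip[OF gtXm p(2)])
      show "integrable M (\<lambda>\<omega>. max ((gt t \<circ> X) \<omega> - t) 0)"
        using posG[OF F1[OF that(1)]] posint_iff[OF gtXm] by simp
    qed
    finally show ?thesis unfolding V_def .
  qed
  have lip: "C-lipschitz_on {0..} V"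
  proof (rule lipschitz_onI)
    fix x y :: real assume "x \<in> {0..}" "y \<in> {0..}"
    then have "V x \<le> V y + C * \<bar>x - y\<bar>" "V y \<le> V x + C * \<bar>y - x\<bar>" using F3 by auto
    then show "dist (V x) (V y) \<le> C * dist x y" by (auto simp: dist_real_def abs_minus_commute)
  next
    show "0 \<le> C" unfolding C_def using p by simp
  qed
  have Vge: "t \<le> V t" if "0 \<le> t" for t
  proof -
    have "0 \<le> (\<integral>\<omega>. Zf t \<omega> \<partial>M)" by (rule integral_nonneg_AE) (use Zf0[OF that] in auto)
    then show ?thesis unfolding Vf[OF that] using p by simp
  qed
  have V00: "0 \<le> V 0" using Vge[of 0] by simp
  have "continuous_on {0..V 0} V"
    by (rule lipschitz_on_continuous_on[OF lipschitz_on_subset[OF lip]]) auto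
  then obtain ts where ts: "ts \<in> {0..V 0}" "\<forall>t\<in>{0..V 0}. V ts \<le> V t"
    using continuous_attains_inf[of "{0..V 0}" V] V00 by auto
  have Vmin: "V ts \<le> V t" if "0 \<le> t" for t
  proof (cases "t \<le> V 0")
    case True then show ?thesis using ts that by auto
  next
    case False
    then have "V 0 < t" by simp
    moreover have "V ts \<le> V 0" using ts V00 by auto
    ultimately show ?thesis using Vge[OF that] by simp
  qed
  have ts0: "0 \<le> ts" using ts by auto
  have opt_le: "ES M p (gt ts \<circ> X) \<le> ES M p (h \<circ> X)" if h: "h \<in> Gset M \<gamma> X x0 u" for h
  proof -
    have hm: "h \<in> borel_measurable borel" and hb: "AE \<omega> in M. 0 \<le> h (X \<omega>) \<and> h (X \<omega>) \<le> u (X \<omega>)"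
      using h unfolding Gset_def by auto
    have hXm: "h \<circ> X \<in> borel_measurable M" using hm X by measurable
    have v0: "0 \<le> VaR M p (h \<circ> X)"
      by (rule VaR_nonneg[OF hXm p]) (use hb in auto)
    have "ES M p (gt ts \<circ> X) \<le> ereal (jr M p (gt ts \<circ> X) ts)"
      by (rule ES_le_jr[OF gtXm p posG[OF F1[OF ts0]]])
    also have "jr M p (gt ts \<circ> X) ts = V ts" unfolding V_def ..
    also have "V ts \<le> V (VaR M p (h \<circ> X))" by (rule Vmin[OF v0])
    also have "V (VaR M p (h \<circ> X)) \<le> jr M p (h \<circ> X) (VaR M p (h \<circ> X))" by (rule F2[OF v0 h])
    also have "ereal (jr M p (h \<circ> X) (VaR M p (h \<circ> X))) = ES M p (h \<circ> X)"
      using ES_posint[OF hXm p posG[OF h]] by simp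
    finally show ?thesis by (simp add: comp_def)
  qed
  have opt: "gt ts \<in> optimal_set (ES M p) (Gset M \<gamma> X x0 u) X"
    unfolding optimal_set_def
  proof (intro CollectI conjI F1[OF ts0] antisym)
    show "ES M p (gt ts \<circ> X) \<le> (INF h\<in>Gset M \<gamma> X x0 u. ES M p (h \<circ> X))"
      by (rule INF_greatest) (rule opt_le)
    show "(INF h\<in>Gset M \<gamma> X x0 u. ES M p (h \<circ> X)) \<le> ES M p (gt ts \<circ> X)"
      by (rule INF_lower[OF F1[OF ts0]])
  qed
  have Qs: "0 \<le> ss ts" "ss ts \<le> 1" "prob {\<omega>\<in>space M. \<gamma> (X \<omega>) = cc ts} = 0"
    using Qt[OF ts0] unfolding Q_def by auto
  show ?thesis
    using opt Qs ts0 unfolding gt_def by blast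
qed

end



definition thick :: "real set \<Rightarrow> real \<Rightarrow> real set" where
  "thick A e = (\<Union>a\<in>A. ball a e)"

lemma open_thick: "open (thick A e)" unfolding thick_def by auto

lemma thick_mono: "e \<le> e' \<Longrightarrow> thick A e \<subseteq> thick A e'" unfolding thick_def by auto

lemma subset_thick: "0 < e \<Longrightarrow> A \<subseteq> thick A e" unfolding thick_def by force

lemma cont_from_bounds:
  assumes FX: "F X = ereal r"
    and H: "\<And>e. e > 0 \<Longrightarrow> \<exists>\<delta>>0. \<forall>Y\<in>Z. \<pi> Y X < \<delta> \<longrightarrow> (\<exists>y. F Y = ereal y \<and> \<bar>y - r\<bar> < e)"
  shows "cont_at_wrt Z \<pi> F X"
  unfolding cont_at_wrt_def
proof (intro allI impI)
  fix S assume S: "open S \<and> F X \<in> S"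
  then have "open (ereal -` S)" by (simp add: open_ereal_vimage)
  moreover have "r \<in> ereal -` S" using S FX by simp
  ultimately obtain e where e: "e > 0" "\<And>y. dist y r < e \<Longrightarrow> y \<in> ereal -` S"
    unfolding open_dist by blast
  obtain \<delta> where \<delta>: "\<delta> > 0" "\<forall>Y\<in>Z. \<pi> Y X < \<delta> \<longrightarrow> (\<exists>y. F Y = ereal y \<and> \<bar>y - r\<bar> < e)"
    using H[OF e(1)] by blast
  show "\<exists>\<delta>>0. \<forall>Y\<in>Z. \<pi> Y X < \<delta> \<longrightarrow> F Y \<in> S"
  proof (intro exI[of _ \<delta>] conjI ballI impI \<delta>(1))
    fix Y assume "Y \<in> Z" "\<pi> Y X < \<delta>"
    then obtain y where y: "F Y = ereal y" "\<bar>y - r\<bar> < e" using \<delta>(2) by blast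
    have "dist y r < e" using y(2) by (simp add: dist_real_def)
    then have "y \<in> ereal -` S" by (rule e(2))
    then show "F Y \<in> S" using y(1) by simp
  qed
qed

lemma pw1:
  fixes d \<epsilon> q :: real
  assumes d: "0 \<le> d" and e: "0 < \<epsilon>" and q: "1 \<le> q"
  shows "d \<le> \<epsilon> + \<epsilon> powr (1 - q) * d powr q"
proof (cases "d \<le> \<epsilon>")
  case True
  have "0 \<le> \<epsilon> powr (1 - q) * d powr q" by simp
  then show ?thesis using True by linarith
next
  case False
  then have ed: "\<epsilon> < d" by simp
  have dq: "d powr q = d * d powr (q - 1)"
  proof -
    have "d powr q = d powr (1 + (q - 1))" by simp
    also have "\<dots> = d powr 1 * d powr (q - 1)" by (rule powr_add)
    finally show ?thesis using d by simp
  qed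
  have m: "\<epsilon> powr (q - 1) \<le> d powr (q - 1)" by (rule powr_mono2) (use q e ed in auto)
  have one: "\<epsilon> powr (1 - q) * \<epsilon> powr (q - 1) = 1"
    using powr_add[of \<epsilon> "1 - q" "q - 1", symmetric] e by simp
  have "d = d * (\<epsilon> powr (1 - q) * \<epsilon> powr (q - 1))" using one by simp
  also have "\<dots> \<le> d * (\<epsilon> powr (1 - q) * d powr (q - 1))"
    using m d by (intro mult_left_mono) auto
  also have "\<dots> = \<epsilon> powr (1 - q) * d powr q" unfolding dq by simp
  finally show ?thesis using e by simp
qed

lemma pw2:
  fixes x y q :: real
  assumes q: "1 \<le> q"
  shows "\<bar>y - x\<bar> powr q \<le> 2 powr q * (\<bar>y\<bar> powr q + \<bar>x\<bar> powr q)"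
proof -
  have "\<bar>y - x\<bar> \<le> 2 * max \<bar>y\<bar> \<bar>x\<bar>" by (auto simp: max_def)
  then have "\<bar>y - x\<bar> powr q \<le> (2 * max \<bar>y\<bar> \<bar>x\<bar>) powr q" by (intro powr_mono2) (use q in auto)
  also have "\<dots> = 2 powr q * max \<bar>y\<bar> \<bar>x\<bar> powr q" by (simp add: powr_mult)
  also have "max \<bar>y\<bar> \<bar>x\<bar> powr q \<le> \<bar>y\<bar> powr q + \<bar>x\<bar> powr q" by (auto simp: max_def)
  finally show ?thesis by simp
qed

lemma pw3:
  fixes d q :: real
  assumes q: "1 \<le> q"
  shows "\<bar>d\<bar> \<le> 1 + \<bar>d\<bar> powr q"
proof (cases "\<bar>d\<bar> \<le> 1")
  case True
  have "0 \<le> \<bar>d\<bar> powr q" by simp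
  then show ?thesis using True by linarith
next
  case False
  then have "\<bar>d\<bar> powr 1 \<le> \<bar>d\<bar> powr q" by (intro powr_mono) (use q in auto)
  then show ?thesis by simp
qed

lemma pw4:
  fixes x y t s :: real
  assumes t: "0 \<le> t" and s: "0 \<le> s" "s \<le> 1"
  shows "\<bar>(min y t + s * max (y - t) 0 * indicator Op y) - (min x t + s * max (x - t) 0 * indicator Op x)\<bar>
     \<le> 2 * \<bar>y - x\<bar> + \<bar>x\<bar> * (if (y \<in> Op) \<noteq> (x \<in> Op) then 1 else 0)"
proof -
  define hy where "hy = max (y - t) 0"
  define hx where "hx = max (x - t) 0"
  define iy :: real where "iy = indicator Op y"
  define ix :: real where "ix = indicator Op x"
  have A: "\<bar>min y t - min x t\<bar> \<le> \<bar>y - x\<bar>" by (auto simp: min_def)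
  have h1: "\<bar>hy - hx\<bar> \<le> \<bar>y - x\<bar>" unfolding hy_def hx_def by (auto simp: max_def)
  have h2: "0 \<le> hx" "hx \<le> \<bar>x\<bar>" "0 \<le> hy" unfolding hx_def hy_def using t by (auto simp: max_def)
  have B: "\<bar>hy * iy - hx * ix\<bar> \<le> \<bar>y - x\<bar> + \<bar>x\<bar> * (if (y \<in> Op) \<noteq> (x \<in> Op) then 1 else 0)"
  proof (cases "y \<in> Op"; cases "x \<in> Op")
    assume "y \<in> Op" "x \<in> Op" then show ?thesis using h1 by (simp add: iy_def ix_def)
  next
    assume "y \<in> Op" "x \<notin> Op" then show ?thesis using h1 h2 by (simp add: iy_def ix_def)
  next
    assume "y \<notin> Op" "x \<in> Op" then show ?thesis using h1 h2 by (simp add: iy_def ix_def)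
  next
    assume "y \<notin> Op" "x \<notin> Op" then show ?thesis by (simp add: iy_def ix_def)
  qed
  have C: "\<bar>s * (hy * iy - hx * ix)\<bar> \<le> \<bar>hy * iy - hx * ix\<bar>"
    using s by (simp add: abs_mult mult_left_le_one_le)
  have eq: "(min y t + s * max (y - t) 0 * indicator Op y) - (min x t + s * max (x - t) 0 * indicator Op x)
      = (min y t - min x t) + s * (hy * iy - hx * ix)"
    unfolding hy_def hx_def iy_def ix_def by (simp add: algebra_simps)
  show ?thesis unfolding eq using A B C abs_triangle_ineq[of "min y t - min x t" "s * (hy * iy - hx * ix)"]
    by linarith
qed

context prob_space begin

lemma ev_meas:
  assumes "X \<in> borel_measurable M" "S \<in> sets borel"
  shows "{\<omega>\<in>space M. X \<omega> \<in> S} \<in> events"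
proof -
  have "{\<omega>\<in>space M. X \<omega> \<in> S} = X -` S \<inter> space M" by auto
  then show ?thesis using measurable_sets[OF assms] by simp
qed

lemma TL:
  fixes X :: "'a \<Rightarrow> real"
  assumes X: "X \<in> borel_measurable M" and \<eta>: "0 < \<eta>"
  shows "\<exists>\<epsilon>>0. prob {\<omega>\<in>space M. X \<omega> \<in> thick A \<epsilon>} \<le> prob {\<omega>\<in>space M. X \<omega> \<in> closure A} + \<eta>"
proof -
  define B where "B n = {\<omega>\<in>space M. X \<omega> \<in> thick A (1 / Suc n)}" for n
  have Bm: "range B \<subseteq> events" unfolding B_def using ev_meas[OF X] open_thick by auto
  have dec: "decseq B"
  proof (rule decseq_SucI)
    fix n
    have "1 / real (Suc (Suc n)) \<le> 1 / real (Suc n)" by (rule divide_left_mono) auto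
    then show "B (Suc n) \<subseteq> B n" unfolding B_def using thick_mono by blast
  qed
  have I: "(\<Inter>n. B n) = {\<omega>\<in>space M. X \<omega> \<in> closure A}"
  proof (intro set_eqI iffI)
    fix \<omega> assume "\<omega> \<in> (\<Inter>n. B n)"
    then have sp: "\<omega> \<in> space M" and all: "\<forall>n. X \<omega> \<in> thick A (1 / Suc n)" unfolding B_def by auto
    have "\<forall>e>0. \<exists>y\<in>A. dist y (X \<omega>) < e"
    proof (intro allI impI)
      fix e :: real assume "0 < e"
      then obtain n where n: "1 / real (Suc n) < e" using nat_approx_posE by blast
      from spec[OF all, of n] obtain y where "y \<in> A" "dist y (X \<omega>) < 1 / Suc n" unfolding thick_def by auto
      then show "\<exists>y\<in>A. dist y (X \<omega>) < e" using n less_trans by blast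
    qed
    then show "\<omega> \<in> {\<omega>\<in>space M. X \<omega> \<in> closure A}" using sp by (simp add: closure_approachable)
  next
    fix \<omega> assume "\<omega> \<in> {\<omega>\<in>space M. X \<omega> \<in> closure A}"
    then have sp: "\<omega> \<in> space M" and c: "X \<omega> \<in> closure A" by auto
    show "\<omega> \<in> (\<Inter>n. B n)"
    proof
      fix n
      obtain y where "y \<in> A" "dist y (X \<omega>) < 1 / Suc n"
        using c unfolding closure_approachable by (metis of_nat_0_less_iff zero_less_Suc zero_less_divide_1_iff)
      then show "\<omega> \<in> B n" unfolding B_def thick_def using sp by auto
    qed
  qed
  have "(\<lambda>n. prob (B n)) \<longlonglongrightarrow> prob (\<Inter>n. B n)"
    by (rule finite_Lim_measure_decseq[OF Bm dec])
  then have "eventually (\<lambda>n. prob (B n) < prob (\<Inter>n. B n) + \<eta>) sequentially"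
    using \<eta> by (intro order_tendstoD(2)) auto
  then obtain n where "prob (B n) < prob (\<Inter>n. B n) + \<eta>" unfolding eventually_sequentially by auto
  then have "prob (B n) \<le> prob {\<omega>\<in>space M. X \<omega> \<in> closure A} + \<eta>" unfolding I by simp
  then show ?thesis unfolding B_def by (intro exI[of _ "1 / Suc n"]) auto
qed

lemma jr_coupling:
  fixes A B :: "'a \<Rightarrow> real"
  assumes Am: "A \<in> borel_measurable M" and Bm: "B \<in> borel_measurable M"
    and i: "integrable M (\<lambda>\<omega>. \<bar>A \<omega> - B \<omega>\<bar>)" and PB: "posint M B" and p: "p < 1"
  shows "posint M A" "jr M p A \<tau> \<le> jr M p B \<tau> + (\<integral>\<omega>. \<bar>A \<omega> - B \<omega>\<bar> \<partial>M) / (1 - p)"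
proof -
  have iB: "integrable M (\<lambda>\<omega>. max (B \<omega> - \<tau>) 0)" using PB posint_iff[OF Bm] by simp
  have iB0: "integrable M (\<lambda>\<omega>. max (B \<omega>) 0)" using PB unfolding posint_def .
  show "posint M A" unfolding posint_def
    by (rule int_dom[of "\<lambda>\<omega>. max (B \<omega>) 0 + \<bar>A \<omega> - B \<omega>\<bar>"]) (use iB0 i Am in \<open>auto simp: max_def\<close>)
  then have iA: "integrable M (\<lambda>\<omega>. max (A \<omega> - \<tau>) 0)" using posint_iff[OF Am] by simp
  have "(\<integral>\<omega>. max (A \<omega> - \<tau>) 0 \<partial>M) \<le> (\<integral>\<omega>. max (B \<omega> - \<tau>) 0 + \<bar>A \<omega> - B \<omega>\<bar> \<partial>M)"
    by (rule integral_mono[OF iA]) (use iB i in \<open>auto simp: max_def\<close>)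
  also have "\<dots> = (\<integral>\<omega>. max (B \<omega> - \<tau>) 0 \<partial>M) + (\<integral>\<omega>. \<bar>A \<omega> - B \<omega>\<bar> \<partial>M)"
    using iB i by simp
  finally have a: "(\<integral>\<omega>. max (A \<omega> - \<tau>) 0 \<partial>M) \<le> (\<integral>\<omega>. max (B \<omega> - \<tau>) 0 \<partial>M) + (\<integral>\<omega>. \<bar>A \<omega> - B \<omega>\<bar> \<partial>M)" .
  have "(\<integral>\<omega>. max (A \<omega> - \<tau>) 0 \<partial>M) / (1 - p) \<le> ((\<integral>\<omega>. max (B \<omega> - \<tau>) 0 \<partial>M) + (\<integral>\<omega>. \<bar>A \<omega> - B \<omega>\<bar> \<partial>M)) / (1 - p)"
    by (rule divide_right_mono[OF a]) (use p in auto)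
  then show "jr M p A \<tau> \<le> jr M p B \<tau> + (\<integral>\<omega>. \<bar>A \<omega> - B \<omega>\<bar> \<partial>M) / (1 - p)"
    unfolding jr_def by (simp add: add_divide_distrib)
qed

lemma closure_split:
  fixes X :: "'a \<Rightarrow> real"
  assumes X: "X \<in> borel_measurable M" and Op: "open Op"
    and null: "prob {\<omega>\<in>space M. X \<omega> \<in> closure Op - Op} = 0"
  shows "prob {\<omega>\<in>space M. X \<omega> \<in> closure Op} = prob {\<omega>\<in>space M. X \<omega> \<in> Op}"
proof -
  have m1: "{\<omega>\<in>space M. X \<omega> \<in> Op} \<in> events" using ev_meas[OF X] Op by auto
  have m2: "{\<omega>\<in>space M. X \<omega> \<in> closure Op - Op} \<in> events" using ev_meas[OF X] Op by auto
  have "{\<omega>\<in>space M. X \<omega> \<in> closure Op} = {\<omega>\<in>space M. X \<omega> \<in> Op} \<union> {\<omega>\<in>space M. X \<omega> \<in> closure Op - Op}"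
    using closure_subset by auto
  then have "prob {\<omega>\<in>space M. X \<omega> \<in> closure Op} \<le> prob {\<omega>\<in>space M. X \<omega> \<in> Op} + prob {\<omega>\<in>space M. X \<omega> \<in> closure Op - Op}"
    using measure_Un_le[OF m1 m2] by simp
  moreover have "prob {\<omega>\<in>space M. X \<omega> \<in> Op} \<le> prob {\<omega>\<in>space M. X \<omega> \<in> closure Op}"
    by (rule finite_measure_mono) (use closure_subset ev_meas[OF X] in auto)
  ultimately show ?thesis using null by simp
qed

lemma TL2:
  fixes X :: "'a \<Rightarrow> real"
  assumes X: "X \<in> borel_measurable M" and Op: "open Op"
    and null: "prob {\<omega>\<in>space M. X \<omega> \<in> closure Op - Op} = 0" and \<eta>: "0 < \<eta>"
  shows "\<exists>\<epsilon>>0. prob {\<omega>\<in>space M. X \<omega> \<in> thick Op \<epsilon>} \<le> prob {\<omega>\<in>space M. X \<omega> \<in> Op} + \<eta> \<and>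
     prob {\<omega>\<in>space M. X \<omega> \<in> thick (- Op) \<epsilon>} \<le> prob {\<omega>\<in>space M. X \<omega> \<in> - Op} + \<eta>"
proof -
  obtain e1 where e1: "e1 > 0" "prob {\<omega>\<in>space M. X \<omega> \<in> thick Op e1} \<le> prob {\<omega>\<in>space M. X \<omega> \<in> closure Op} + \<eta>"
    using TL[OF X \<eta>] by blast
  obtain e2 where e2: "e2 > 0" "prob {\<omega>\<in>space M. X \<omega> \<in> thick (- Op) e2} \<le> prob {\<omega>\<in>space M. X \<omega> \<in> closure (- Op)} + \<eta>"
    using TL[OF X \<eta>] by blast
  have cl: "closure (- Op) = - Op" using Op by (simp add: closed_def closure_closed)
  define e where "e = min e1 e2"
  have "prob {\<omega>\<in>space M. X \<omega> \<in> thick Op e} \<le> prob {\<omega>\<in>space M. X \<omega> \<in> thick Op e1}"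
    by (rule finite_measure_mono) (use thick_mono[of e e1 Op] ev_meas[OF X] open_thick in \<open>auto simp: e_def\<close>)
  moreover have "prob {\<omega>\<in>space M. X \<omega> \<in> thick (-Op) e} \<le> prob {\<omega>\<in>space M. X \<omega> \<in> thick (-Op) e2}"
    by (rule finite_measure_mono) (use thick_mono[of e e2 "-Op"] ev_meas[OF X] open_thick in \<open>auto simp: e_def\<close>)
  ultimately show ?thesis
    using e1 e2 closure_split[OF X Op null] cl unfolding e_def by (intro exI[of _ "min e1 e2"]) auto
qed

lemma MIS:
  fixes X Y :: "'a \<Rightarrow> real"
  assumes X: "X \<in> borel_measurable M" and Y: "Y \<in> borel_measurable M" and Op: "open Op"
    and e: "0 < e"
    and t1: "prob {\<omega>\<in>space M. X \<omega> \<in> thick Op e} \<le> prob {\<omega>\<in>space M. X \<omega> \<in> Op} + \<eta>"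
    and t2: "prob {\<omega>\<in>space M. X \<omega> \<in> thick (- Op) e} \<le> prob {\<omega>\<in>space M. X \<omega> \<in> - Op} + \<eta>"
  shows "prob {\<omega>\<in>space M. (Y \<omega> \<in> Op) \<noteq> (X \<omega> \<in> Op)} \<le> prob {\<omega>\<in>space M. e \<le> \<bar>Y \<omega> - X \<omega>\<bar>} + 2 * \<eta>"
proof -
  define E where "E = {\<omega>\<in>space M. e \<le> \<bar>Y \<omega> - X \<omega>\<bar>}"
  define D1 where "D1 = {\<omega>\<in>space M. X \<omega> \<in> thick Op e} - {\<omega>\<in>space M. X \<omega> \<in> Op}"
  define D2 where "D2 = {\<omega>\<in>space M. X \<omega> \<in> thick (- Op) e} - {\<omega>\<in>space M. X \<omega> \<in> - Op}"
  have Em: "E \<in> events" unfolding E_def using X Y by measurable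
  have mO: "{\<omega>\<in>space M. X \<omega> \<in> Op} \<in> events" using ev_meas[OF X] Op by auto
  have mO': "{\<omega>\<in>space M. X \<omega> \<in> - Op} \<in> events" using ev_meas[OF X] Op by auto
  have mT: "{\<omega>\<in>space M. X \<omega> \<in> thick Op e} \<in> events" using ev_meas[OF X] open_thick by auto
  have mT': "{\<omega>\<in>space M. X \<omega> \<in> thick (- Op) e} \<in> events" using ev_meas[OF X] open_thick by auto
  have D1m: "D1 \<in> events" unfolding D1_def using mO mT by auto
  have D2m: "D2 \<in> events" unfolding D2_def using mO' mT' by auto
  have pD1: "prob D1 \<le> \<eta>"
  proof -
    have "prob D1 = prob {\<omega>\<in>space M. X \<omega> \<in> thick Op e} - prob {\<omega>\<in>space M. X \<omega> \<in> Op}"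
      unfolding D1_def by (rule finite_measure_Diff[OF mT mO]) (use subset_thick[OF e, of Op] in auto)
    then show ?thesis using t1 by simp
  qed
  have pD2: "prob D2 \<le> \<eta>"
  proof -
    have "prob D2 = prob {\<omega>\<in>space M. X \<omega> \<in> thick (-Op) e} - prob {\<omega>\<in>space M. X \<omega> \<in> -Op}"
      unfolding D2_def by (rule finite_measure_Diff[OF mT' mO']) (use subset_thick[OF e, of "-Op"] in auto)
    then show ?thesis using t2 by simp
  qed
  have sub: "{\<omega>\<in>space M. (Y \<omega> \<in> Op) \<noteq> (X \<omega> \<in> Op)} \<subseteq> E \<union> D1 \<union> D2"
  proof
    fix \<omega> assume w: "\<omega> \<in> {\<omega>\<in>space M. (Y \<omega> \<in> Op) \<noteq> (X \<omega> \<in> Op)}"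
    show "\<omega> \<in> E \<union> D1 \<union> D2"
    proof (cases "e \<le> \<bar>Y \<omega> - X \<omega>\<bar>")
      case True then show ?thesis using w unfolding E_def by auto
    next
      case False
      then have d: "dist (Y \<omega>) (X \<omega>) < e" by (simp add: dist_real_def)
      show ?thesis
      proof (cases "Y \<omega> \<in> Op")
        case True
        then have "X \<omega> \<notin> Op" using w by auto
        moreover have "X \<omega> \<in> thick Op e" unfolding thick_def using True d by auto
        ultimately show ?thesis using w unfolding D1_def by auto
      next
        case False
        then have "X \<omega> \<in> Op" using w by auto
        moreover have "X \<omega> \<in> thick (-Op) e" unfolding thick_def using False d by auto
        ultimately show ?thesis using w unfolding D2_def by auto
      qed
    qed
  qed
  have "prob {\<omega>\<in>space M. (Y \<omega> \<in> Op) \<noteq> (X \<omega> \<in> Op)} \<le> prob (E \<union> D1 \<union> D2)"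
    by (rule finite_measure_mono[OF sub]) (use Em D1m D2m in auto)
  also have "\<dots> \<le> prob (E \<union> D1) + prob D2"
    by (rule measure_Un_le) (use Em D1m D2m in auto)
  also have "prob (E \<union> D1) \<le> prob E + prob D1"
    by (rule measure_Un_le) (use Em D1m in auto)
  finally show ?thesis using pD1 pD2 unfolding E_def by simp
qed

lemma jr_two_point:
  fixes Y :: "'a \<Rightarrow> real"
  assumes Y: "Y \<in> borel_measurable M" and Op: "Op \<in> sets borel"
  shows "jr M p (\<lambda>\<omega>. a + d * indicator Op (Y \<omega>)) \<tau> =
     \<tau> + (max (a - \<tau>) 0 + prob {\<omega>\<in>space M. Y \<omega> \<in> Op} * (max (a + d - \<tau>) 0 - max (a - \<tau>) 0)) / (1 - p)"
proof -
  define S where "S = {\<omega>\<in>space M. Y \<omega> \<in> Op}"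
  have Sm: "S \<in> events" unfolding S_def by (rule ev_meas[OF Y Op])
  have "(\<integral>\<omega>. max (a + d * indicator Op (Y \<omega>) - \<tau>) 0 \<partial>M) =
        (\<integral>\<omega>. max (a - \<tau>) 0 + (max (a + d - \<tau>) 0 - max (a - \<tau>) 0) * indicator S \<omega> \<partial>M)"
    by (rule Bochner_Integration.integral_cong) (auto simp: S_def indicator_def)
  also have "\<dots> = max (a - \<tau>) 0 + prob S * (max (a + d - \<tau>) 0 - max (a - \<tau>) 0)"
    using Sm prob_space by (simp add: less_top[symmetric])
  finally show ?thesis unfolding jr_def S_def by simp
qed

lemma ES_two_point_close:
  fixes X Y :: "'a \<Rightarrow> real"
  assumes p: "0 < p" "p < 1" and X: "X \<in> borel_measurable M" and Y: "Y \<in> borel_measurable M"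
    and Op: "Op \<in> sets borel" and d: "0 \<le> d"
    and cl: "\<bar>prob {\<omega>\<in>space M. Y \<omega> \<in> Op} - prob {\<omega>\<in>space M. X \<omega> \<in> Op}\<bar> \<le> \<eta>"
  shows "\<exists>y z. ES M p ((\<lambda>x. a + d * indicator Op x) \<circ> Y) = ereal y \<and>
     ES M p ((\<lambda>x. a + d * indicator Op x) \<circ> X) = ereal z \<and> \<bar>y - z\<bar> \<le> d * \<eta> / (1 - p)"
proof -
  define g where "g = (\<lambda>x. a + d * indicator Op x)"
  have gm: "g \<in> borel_measurable borel" unfolding g_def using Op by measurable
  have gYm: "g \<circ> Y \<in> borel_measurable M" and gXm: "g \<circ> X \<in> borel_measurable M"
    using gm X Y by measurable
  have pos: "posint M (g \<circ> W)" if W: "W \<in> borel_measurable M" for W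
    unfolding posint_def
    by (rule int_dom[of "\<lambda>_. \<bar>a\<bar> + d"]) (use gm W d in \<open>auto simp: g_def indicator_def\<close>)
  have PY: "posint M (g \<circ> Y)" and PX: "posint M (g \<circ> X)" using pos X Y by auto
  have diff: "jr M p (g \<circ> V) \<tau> \<le> jr M p (g \<circ> W) \<tau> + d * \<eta> / (1 - p)"
    if V: "V \<in> borel_measurable M" and W: "W \<in> borel_measurable M"
      and VW: "\<bar>prob {\<omega>\<in>space M. V \<omega> \<in> Op} - prob {\<omega>\<in>space M. W \<omega> \<in> Op}\<bar> \<le> \<eta>" for V W \<tau>
  proof -
    define \<Delta> where "\<Delta> = max (a + d - \<tau>) 0 - max (a - \<tau>) 0"
    have \<Delta>: "0 \<le> \<Delta>" "\<Delta> \<le> d" unfolding \<Delta>_def using d by (auto simp: max_def)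
    have eqV: "g \<circ> V = (\<lambda>\<omega>. a + d * indicator Op (V \<omega>))" unfolding g_def by auto
    have eqW: "g \<circ> W = (\<lambda>\<omega>. a + d * indicator Op (W \<omega>))" unfolding g_def by auto
    have "(prob {\<omega>\<in>space M. V \<omega> \<in> Op} - prob {\<omega>\<in>space M. W \<omega> \<in> Op}) * \<Delta> \<le> \<eta> * d"
    proof -
      have "(prob {\<omega>\<in>space M. V \<omega> \<in> Op} - prob {\<omega>\<in>space M. W \<omega> \<in> Op}) * \<Delta> \<le> \<eta> * \<Delta>"
        using VW \<Delta> by (intro mult_right_mono) auto
      also have "\<dots> \<le> \<eta> * d" using \<Delta> VW by (intro mult_left_mono) auto
      finally show ?thesis .
    qed
    then have "(prob {\<omega>\<in>space M. V \<omega> \<in> Op} - prob {\<omega>\<in>space M. W \<omega> \<in> Op}) * \<Delta> / (1 - p) \<le> \<eta> * d / (1 - p)"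
      by (rule divide_right_mono) (use p in auto)
    moreover have "(max (a - \<tau>) 0 + prob {\<omega>\<in>space M. V \<omega> \<in> Op} * \<Delta>) / (1 - p) =
       (max (a - \<tau>) 0 + prob {\<omega>\<in>space M. W \<omega> \<in> Op} * \<Delta>) / (1 - p) +
       (prob {\<omega>\<in>space M. V \<omega> \<in> Op} - prob {\<omega>\<in>space M. W \<omega> \<in> Op}) * \<Delta> / (1 - p)"
      by (simp add: add_divide_distrib diff_divide_distrib left_diff_distrib)
    ultimately show ?thesis
      unfolding eqV eqW jr_two_point[OF V Op] jr_two_point[OF W Op] \<Delta>_def[symmetric]
      by (simp add: mult.commute)
  qed
  have c1: "ES M p (g \<circ> Y) \<le> ES M p (g \<circ> X) + ereal (d * \<eta> / (1 - p))"
    by (rule ES_compare[OF gYm gXm p PY PX]) (rule diff[OF Y X cl])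
  have c2: "ES M p (g \<circ> X) \<le> ES M p (g \<circ> Y) + ereal (d * \<eta> / (1 - p))"
    by (rule ES_compare[OF gXm gYm p PX PY]) (rule diff[OF X Y], use cl in auto)
  show ?thesis
    using c1 c2 ES_posint[OF gYm p PY] ES_posint[OF gXm p PX] unfolding g_def[symmetric]
    by auto
qed

lemma cont_two_point:
  fixes X :: "'a \<Rightarrow> real"
  assumes p: "0 < p" "p < 1" and X: "X \<in> borel_measurable M"
    and Op: "Op \<in> sets borel" and d: "0 \<le> d"
    and close: "\<And>\<eta>. \<eta> > 0 \<Longrightarrow> \<exists>\<delta>>0. \<forall>Y\<in>Z. \<pi> Y X < \<delta> \<longrightarrow> Y \<in> borel_measurable M \<and>
        \<bar>prob {\<omega>\<in>space M. Y \<omega> \<in> Op} - prob {\<omega>\<in>space M. X \<omega> \<in> Op}\<bar> \<le> \<eta>"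
  shows "cont_at_wrt Z \<pi> (\<lambda>Y. ES M p ((\<lambda>x. a + d * indicator Op x) \<circ> Y)) X"
proof -
  obtain z where z: "ES M p ((\<lambda>x. a + d * indicator Op x) \<circ> X) = ereal z"
    using ES_two_point_close[OF p X X Op d, of 0] by auto
  show ?thesis
  proof (rule cont_from_bounds[where F="\<lambda>Y. ES M p ((\<lambda>x. a + d * indicator Op x) \<circ> Y)", OF z])
    fix e :: real assume e: "0 < e"
    define \<eta> where "\<eta> = e / (2 * (d + 1)) * (1 - p)"
    have \<eta>: "0 < \<eta>" unfolding \<eta>_def using e p d by auto
    have small: "d * \<eta> / (1 - p) < e"
    proof -
      have d1: "d + 1 \<noteq> 0" using d by simp
      have "d * \<eta> / (1 - p) = d * (e / (2 * (d + 1)))" unfolding \<eta>_def using p by simp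
      also have "\<dots> \<le> (d + 1) * (e / (2 * (d + 1)))" by (rule mult_right_mono) (use e d in auto)
      also have "\<dots> = e / 2" using d1 by (simp add: field_simps)
      finally have "d * \<eta> / (1 - p) \<le> e / 2" .
      then show ?thesis using e by linarith
    qed
    obtain \<delta> where \<delta>: "\<delta> > 0" "\<forall>Y\<in>Z. \<pi> Y X < \<delta> \<longrightarrow> Y \<in> borel_measurable M \<and>
        \<bar>prob {\<omega>\<in>space M. Y \<omega> \<in> Op} - prob {\<omega>\<in>space M. X \<omega> \<in> Op}\<bar> \<le> \<eta>"
      using close[OF \<eta>] by blast
    show "\<exists>\<delta>>0. \<forall>Y\<in>Z. \<pi> Y X < \<delta> \<longrightarrow> (\<exists>y. ES M p ((\<lambda>x. a + d * indicator Op x) \<circ> Y) = ereal y \<and> \<bar>y - z\<bar> < e)"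
    proof (rule exI[of _ \<delta>], intro conjI ballI impI \<delta>(1))
      fix Y assume "Y \<in> Z" "\<pi> Y X < \<delta>"
      then have Y: "Y \<in> borel_measurable M" and cl: "\<bar>prob {\<omega>\<in>space M. Y \<omega> \<in> Op} - prob {\<omega>\<in>space M. X \<omega> \<in> Op}\<bar> \<le> \<eta>"
        using \<delta>(2) by auto
      obtain y z' where yz: "ES M p ((\<lambda>x. a + d * indicator Op x) \<circ> Y) = ereal y"
        "ES M p ((\<lambda>x. a + d * indicator Op x) \<circ> X) = ereal z'" "\<bar>y - z'\<bar> \<le> d * \<eta> / (1 - p)"
        using ES_two_point_close[OF p X Y Op d cl] by blast
      have "z' = z" using yz(2) z by simp
      then show "\<exists>y. ES M p ((\<lambda>x. a + d * indicator Op x) \<circ> Y) = ereal y \<and> \<bar>y - z\<bar> < e"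
        using yz small by auto
    qed
  qed
qed

lemma Linf_props:
  fixes X :: "'a \<Rightarrow> real"
  assumes X: "X \<in> Linf M"
  shows "X \<in> borel_measurable M" "integrable M X"
    "\<And>e. 0 < e \<Longrightarrow> \<forall>Y\<in>Linf M. dist_inf M Y X < e \<longrightarrow> Y \<in> borel_measurable M \<and>
       integrable M (\<lambda>\<omega>. \<bar>Y \<omega> - X \<omega>\<bar>) \<and> (\<integral>\<omega>. \<bar>Y \<omega> - X \<omega>\<bar> \<partial>M) \<le> e"
proof -
  obtain C2 where Xm: "X \<in> borel_measurable M" and C2: "AE \<omega> in M. \<bar>X \<omega>\<bar> \<le> C2"
    using X unfolding Linf_def by auto
  show "X \<in> borel_measurable M" by (rule Xm)
  show "integrable M X" by (rule int_dom[of "\<lambda>_. C2"]) (use Xm C2 in auto)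
  fix e :: real assume e: "0 < e"
  show "\<forall>Y\<in>Linf M. dist_inf M Y X < e \<longrightarrow> Y \<in> borel_measurable M \<and>
       integrable M (\<lambda>\<omega>. \<bar>Y \<omega> - X \<omega>\<bar>) \<and> (\<integral>\<omega>. \<bar>Y \<omega> - X \<omega>\<bar> \<partial>M) \<le> e"
  proof (intro ballI impI)
    fix Y assume Y: "Y \<in> Linf M" and dY: "dist_inf M Y X < e"
    obtain C1 where Ym: "Y \<in> borel_measurable M" and C1: "AE \<omega> in M. \<bar>Y \<omega>\<bar> \<le> C1"
      using Y unfolding Linf_def by auto
    define E where "E = esssup M (\<lambda>\<omega>. ereal \<bar>Y \<omega> - X \<omega>\<bar>)"
    have em: "(\<lambda>\<omega>. ereal \<bar>Y \<omega> - X \<omega>\<bar>) \<in> borel_measurable M" using Xm Ym by measurable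
    have hAE: "AE \<omega> in M. ereal \<bar>Y \<omega> - X \<omega>\<bar> \<le> E" unfolding E_def by (rule esssup_AE)
    have hE: "E \<le> ereal (C1 + C2)" unfolding E_def
      by (rule esssup_I[OF em]) (use C1 C2 in \<open>eventually_elim, auto\<close>)
    have nm: "E \<noteq> - \<infinity>"
    proof
      assume Em: "E = - \<infinity>"
      have "AE \<omega> in M. ereal \<bar>Y \<omega> - X \<omega>\<bar> \<le> - \<infinity>" using hAE unfolding Em .
      then have "AE \<omega> in M. False" by eventually_elim simp
      then show False using AE_False by simp
    qed
    obtain r where r: "E = ereal r" using hE nm by (cases E) auto
    have rle: "r < e" using dY unfolding dist_inf_def E_def[symmetric] r by simp
    have AEr: "AE \<omega> in M. \<bar>Y \<omega> - X \<omega>\<bar> \<le> r" using hAE unfolding r by simp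
    have im: "(\<lambda>\<omega>. \<bar>Y \<omega> - X \<omega>\<bar>) \<in> borel_measurable M" using Xm Ym by measurable
    have ii: "integrable M (\<lambda>\<omega>. \<bar>Y \<omega> - X \<omega>\<bar>)"
      by (rule int_dom[of "\<lambda>_. r"]) (use im AEr in auto)
    have "(\<integral>\<omega>. \<bar>Y \<omega> - X \<omega>\<bar> \<partial>M) \<le> (\<integral>\<omega>. r \<partial>M)"
      by (rule integral_mono_AE[OF ii]) (use AEr in auto)
    also have "\<dots> = r" using prob_space by simp
    finally show "Y \<in> borel_measurable M \<and> integrable M (\<lambda>\<omega>. \<bar>Y \<omega> - X \<omega>\<bar>) \<and> (\<integral>\<omega>. \<bar>Y \<omega> - X \<omega>\<bar> \<partial>M) \<le> e"
      using Ym ii rle by simp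
  qed
qed

lemma Lq_props:
  fixes X :: "'a \<Rightarrow> real"
  assumes X: "X \<in> Lq M q" and q: "1 \<le> q"
  shows "X \<in> borel_measurable M" "integrable M X"
    "\<And>e. 0 < e \<Longrightarrow> \<exists>\<delta>>0. \<forall>Y\<in>Lq M q. dist_q M q Y X < \<delta> \<longrightarrow> Y \<in> borel_measurable M \<and>
       integrable M (\<lambda>\<omega>. \<bar>Y \<omega> - X \<omega>\<bar>) \<and> (\<integral>\<omega>. \<bar>Y \<omega> - X \<omega>\<bar> \<partial>M) \<le> e"
proof -
  have Xm: "X \<in> borel_measurable M" and Xq: "integrable M (\<lambda>\<omega>. \<bar>X \<omega>\<bar> powr q)"
    using X unfolding Lq_def by auto
  show "X \<in> borel_measurable M" by (rule Xm)
  show "integrable M X"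
    by (rule int_dom[of "\<lambda>\<omega>. 1 + \<bar>X \<omega>\<bar> powr q"]) (use Xm Xq pw3[OF q] in auto)
  fix e :: real assume e: "0 < e"
  define \<epsilon> where "\<epsilon> = e / 2"
  have \<epsilon>: "0 < \<epsilon>" unfolding \<epsilon>_def using e by simp
  define K where "K = e / 2 * \<epsilon> powr (q - 1)"
  have K: "0 < K" unfolding K_def using e \<epsilon> by simp
  define \<delta> where "\<delta> = K powr (1 / q)"
  have \<delta>: "0 < \<delta>" unfolding \<delta>_def using K by simp
  have \<delta>q: "\<delta> powr q = K" unfolding \<delta>_def using K q by (simp add: powr_powr)
  show "\<exists>\<delta>>0. \<forall>Y\<in>Lq M q. dist_q M q Y X < \<delta> \<longrightarrow> Y \<in> borel_measurable M \<and>
       integrable M (\<lambda>\<omega>. \<bar>Y \<omega> - X \<omega>\<bar>) \<and> (\<integral>\<omega>. \<bar>Y \<omega> - X \<omega>\<bar> \<partial>M) \<le> e"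
  proof (rule exI[of _ \<delta>], intro conjI ballI impI \<delta>)
    fix Y assume Y: "Y \<in> Lq M q" and dY: "dist_q M q Y X < \<delta>"
    have Ym: "Y \<in> borel_measurable M" and Yq: "integrable M (\<lambda>\<omega>. \<bar>Y \<omega> \<bar> powr q)"
      using Y unfolding Lq_def by auto
    have iq: "integrable M (\<lambda>\<omega>. \<bar>Y \<omega> - X \<omega>\<bar> powr q)"
      by (rule int_dom[of "\<lambda>\<omega>. 2 powr q * (\<bar>Y \<omega>\<bar> powr q + \<bar>X \<omega>\<bar> powr q)"]) (use Xm Ym Xq Yq pw2[OF q] in auto)
    define I where "I = (\<integral>\<omega>. \<bar>Y \<omega> - X \<omega>\<bar> powr q \<partial>M)"
    have I0: "0 \<le> I" unfolding I_def by (rule integral_nonneg_AE) auto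
    have "I powr (1 / q) < \<delta>" using dY unfolding dist_q_def I_def .
    then have "(I powr (1 / q)) powr q < \<delta> powr q" by (intro powr_less_mono2) (use q in auto)
    then have IK: "I < K" using I0 q \<delta>q by (simp add: powr_powr)
    show "Y \<in> borel_measurable M" by (rule Ym)
    show i1: "integrable M (\<lambda>\<omega>. \<bar>Y \<omega> - X \<omega>\<bar>)"
      by (rule int_dom[of "\<lambda>\<omega>. 1 + \<bar>Y \<omega> - X \<omega>\<bar> powr q"]) (use Xm Ym iq pw3[OF q] in auto)
    have "(\<integral>\<omega>. \<bar>Y \<omega> - X \<omega>\<bar> \<partial>M) \<le> (\<integral>\<omega>. \<epsilon> + \<epsilon> powr (1 - q) * \<bar>Y \<omega> - X \<omega>\<bar> powr q \<partial>M)"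
      by (rule integral_mono[OF i1]) (use iq pw1[OF _ \<epsilon> q] in auto)
    also have "\<dots> = \<epsilon> + \<epsilon> powr (1 - q) * I" unfolding I_def using iq prob_space by simp
    also have "\<dots> \<le> \<epsilon> + \<epsilon> powr (1 - q) * K" using IK by (intro add_left_mono mult_left_mono) auto
    also have "\<epsilon> powr (1 - q) * K = e / 2"
    proof -
      have one: "\<epsilon> powr (1 - q) * \<epsilon> powr (q - 1) = 1"
        using powr_add[of \<epsilon> "1 - q" "q - 1", symmetric] \<epsilon> by simp
      show ?thesis unfolding K_def using one by (simp add: algebra_simps)
    qed
    finally show "(\<integral>\<omega>. \<bar>Y \<omega> - X \<omega>\<bar> \<partial>M) \<le> e" unfolding \<epsilon>_def by simp
  qed
qed

lemma Lq_choice_props: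
  fixes X :: "'a \<Rightarrow> real"
  assumes LZ: "Lq_choice M Z \<pi>" and XZ: "X \<in> Z"
  shows "X \<in> borel_measurable M" "integrable M X"
    "\<And>e. 0 < e \<Longrightarrow> \<exists>\<delta>>0. \<forall>Y\<in>Z. \<pi> Y X < \<delta> \<longrightarrow> Y \<in> borel_measurable M \<and>
       integrable M (\<lambda>\<omega>. \<bar>Y \<omega> - X \<omega>\<bar>) \<and> (\<integral>\<omega>. \<bar>Y \<omega> - X \<omega>\<bar> \<partial>M) \<le> e"
proof -
  from LZ consider (inf) "Z = Linf M" "\<pi> = dist_inf M" | (q) q where "1 \<le> q" "Z = Lq M q" "\<pi> = dist_q M q"
    unfolding Lq_choice_def by blast
  then have all: "X \<in> borel_measurable M \<and> integrable M X \<and> (\<forall>e>0. \<exists>\<delta>>0. \<forall>Y\<in>Z. \<pi> Y X < \<delta> \<longrightarrow> Y \<in> borel_measurable M \<and>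
       integrable M (\<lambda>\<omega>. \<bar>Y \<omega> - X \<omega>\<bar>) \<and> (\<integral>\<omega>. \<bar>Y \<omega> - X \<omega>\<bar> \<partial>M) \<le> e)"
  proof cases
    case inf
    then show ?thesis using Linf_props[of X] XZ by blast
  next
    case (q q)
    then show ?thesis using Lq_props[of X q] XZ by blast
  qed
  then show "X \<in> borel_measurable M" "integrable M X" by auto
  fix e :: real assume "0 < e"
  then show "\<exists>\<delta>>0. \<forall>Y\<in>Z. \<pi> Y X < \<delta> \<longrightarrow> Y \<in> borel_measurable M \<and>
       integrable M (\<lambda>\<omega>. \<bar>Y \<omega> - X \<omega>\<bar>) \<and> (\<integral>\<omega>. \<bar>Y \<omega> - X \<omega>\<bar> \<partial>M) \<le> e" using all by blast
qed

lemma beta_mis: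
  fixes X Y :: "'a \<Rightarrow> real"
  assumes X: "X \<in> borel_measurable M" and Y: "Y \<in> borel_measurable M" and Op: "Op \<in> sets borel"
  shows "\<bar>prob {\<omega>\<in>space M. Y \<omega> \<in> Op} - prob {\<omega>\<in>space M. X \<omega> \<in> Op}\<bar> \<le> prob {\<omega>\<in>space M. (Y \<omega> \<in> Op) \<noteq> (X \<omega> \<in> Op)}"
proof -
  have mX: "{\<omega>\<in>space M. X \<omega> \<in> Op} \<in> events" by (rule ev_meas[OF X Op])
  have mY: "{\<omega>\<in>space M. Y \<omega> \<in> Op} \<in> events" by (rule ev_meas[OF Y Op])
  have mM: "{\<omega>\<in>space M. (Y \<omega> \<in> Op) \<noteq> (X \<omega> \<in> Op)} \<in> events"
  proof -
    have "{\<omega>\<in>space M. (Y \<omega> \<in> Op) \<noteq> (X \<omega> \<in> Op)} = ({\<omega>\<in>space M. Y \<omega> \<in> Op} - {\<omega>\<in>space M. X \<omega> \<in> Op}) \<union> ({\<omega>\<in>space M. X \<omega> \<in> Op} - {\<omega>\<in>space M. Y \<omega> \<in> Op})"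
      by auto
    then show ?thesis using mX mY by auto
  qed
  have a: "prob {\<omega>\<in>space M. Y \<omega> \<in> Op} \<le> prob {\<omega>\<in>space M. X \<omega> \<in> Op} + prob {\<omega>\<in>space M. (Y \<omega> \<in> Op) \<noteq> (X \<omega> \<in> Op)}"
  proof -
    have "prob {\<omega>\<in>space M. Y \<omega> \<in> Op} \<le> prob ({\<omega>\<in>space M. X \<omega> \<in> Op} \<union> {\<omega>\<in>space M. (Y \<omega> \<in> Op) \<noteq> (X \<omega> \<in> Op)})"
      by (rule finite_measure_mono) (use mX mM in auto)
    also have "\<dots> \<le> prob {\<omega>\<in>space M. X \<omega> \<in> Op} + prob {\<omega>\<in>space M. (Y \<omega> \<in> Op) \<noteq> (X \<omega> \<in> Op)}"
      by (rule measure_Un_le) (use mX mM in auto)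
    finally show ?thesis .
  qed
  have b: "prob {\<omega>\<in>space M. X \<omega> \<in> Op} \<le> prob {\<omega>\<in>space M. Y \<omega> \<in> Op} + prob {\<omega>\<in>space M. (Y \<omega> \<in> Op) \<noteq> (X \<omega> \<in> Op)}"
  proof -
    have "prob {\<omega>\<in>space M. X \<omega> \<in> Op} \<le> prob ({\<omega>\<in>space M. Y \<omega> \<in> Op} \<union> {\<omega>\<in>space M. (Y \<omega> \<in> Op) \<noteq> (X \<omega> \<in> Op)})"
      by (rule finite_measure_mono) (use mY mM in auto)
    also have "\<dots> \<le> prob {\<omega>\<in>space M. Y \<omega> \<in> Op} + prob {\<omega>\<in>space M. (Y \<omega> \<in> Op) \<noteq> (X \<omega> \<in> Op)}"
      by (rule measure_Un_le) (use mY mM in auto)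
    finally show ?thesis .
  qed
  show ?thesis using a b by linarith
qed

lemma L1_prob_close:
  fixes X :: "'a \<Rightarrow> real"
  assumes X: "X \<in> borel_measurable M" and Op: "open Op"
    and null: "prob {\<omega>\<in>space M. X \<omega> \<in> closure Op - Op} = 0"
    and L1: "\<And>e. 0 < e \<Longrightarrow> \<exists>\<delta>>0. \<forall>Y\<in>Z. \<pi> Y X < \<delta> \<longrightarrow> Y \<in> borel_measurable M \<and>
       integrable M (\<lambda>\<omega>. \<bar>Y \<omega> - X \<omega>\<bar>) \<and> (\<integral>\<omega>. \<bar>Y \<omega> - X \<omega>\<bar> \<partial>M) \<le> e"
    and \<eta>: "0 < \<eta>"
  shows "\<exists>\<delta>>0. \<forall>Y\<in>Z. \<pi> Y X < \<delta> \<longrightarrow> Y \<in> borel_measurable M \<and>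
        \<bar>prob {\<omega>\<in>space M. Y \<omega> \<in> Op} - prob {\<omega>\<in>space M. X \<omega> \<in> Op}\<bar> \<le> \<eta>"
proof -
  obtain \<epsilon> where \<epsilon>: "\<epsilon> > 0" "prob {\<omega>\<in>space M. X \<omega> \<in> thick Op \<epsilon>} \<le> prob {\<omega>\<in>space M. X \<omega> \<in> Op} + \<eta> / 4"
     "prob {\<omega>\<in>space M. X \<omega> \<in> thick (- Op) \<epsilon>} \<le> prob {\<omega>\<in>space M. X \<omega> \<in> - Op} + \<eta> / 4"
    using TL2[OF X Op null, of "\<eta> / 4"] \<eta> by auto
  obtain \<delta> where \<delta>: "\<delta> > 0" "\<forall>Y\<in>Z. \<pi> Y X < \<delta> \<longrightarrow> Y \<in> borel_measurable M \<and>
       integrable M (\<lambda>\<omega>. \<bar>Y \<omega> - X \<omega>\<bar>) \<and> (\<integral>\<omega>. \<bar>Y \<omega> - X \<omega>\<bar> \<partial>M) \<le> \<epsilon> * (\<eta> / 2)"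
    using L1[of "\<epsilon> * (\<eta> / 2)"] \<epsilon> \<eta> by auto
  show ?thesis
  proof (rule exI[of _ \<delta>], intro conjI ballI impI \<delta>(1))
    fix Y assume "Y \<in> Z" "\<pi> Y X < \<delta>"
    then have Y: "Y \<in> borel_measurable M" and i: "integrable M (\<lambda>\<omega>. \<bar>Y \<omega> - X \<omega>\<bar>)"
      and b: "(\<integral>\<omega>. \<bar>Y \<omega> - X \<omega>\<bar> \<partial>M) \<le> \<epsilon> * (\<eta> / 2)" using \<delta>(2) by auto
    show "Y \<in> borel_measurable M" by (rule Y)
    have mk: "prob {\<omega>\<in>space M. \<epsilon> \<le> \<bar>Y \<omega> - X \<omega>\<bar>} \<le> (\<integral>\<omega>. \<bar>Y \<omega> - X \<omega>\<bar> \<partial>M) / \<epsilon>"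
      by (rule integral_Markov_inequality_measure[OF i _ _ \<epsilon>(1), of "space M"]) auto
    also have "\<dots> \<le> \<epsilon> * (\<eta> / 2) / \<epsilon>" by (rule divide_right_mono[OF b]) (use \<epsilon> in auto)
    also have "\<dots> = \<eta> / 2" using \<epsilon> by simp
    finally have mk': "prob {\<omega>\<in>space M. \<epsilon> \<le> \<bar>Y \<omega> - X \<omega>\<bar>} \<le> \<eta> / 2" .
    have "\<bar>prob {\<omega>\<in>space M. Y \<omega> \<in> Op} - prob {\<omega>\<in>space M. X \<omega> \<in> Op}\<bar> \<le> prob {\<omega>\<in>space M. (Y \<omega> \<in> Op) \<noteq> (X \<omega> \<in> Op)}"
      by (rule beta_mis[OF X Y]) (use Op in auto)
    also have "\<dots> \<le> prob {\<omega>\<in>space M. \<epsilon> \<le> \<bar>Y \<omega> - X \<omega>\<bar>} + 2 * (\<eta> / 4)"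
      by (rule MIS[OF X Y Op \<epsilon>(1) \<epsilon>(2) \<epsilon>(3)])
    finally show "\<bar>prob {\<omega>\<in>space M. Y \<omega> \<in> Op} - prob {\<omega>\<in>space M. X \<omega> \<in> Op}\<bar> \<le> \<eta>" using mk' by simp
  qed
qed

lemma prob_distr_le:
  fixes Y :: "'a \<Rightarrow> real"
  assumes Y: "Y \<in> borel_measurable M" and A: "A \<in> sets borel"
  shows "measure (distr M borel Y) A = prob {\<omega>\<in>space M. Y \<omega> \<in> A}"
proof -
  have "{\<omega>\<in>space M. Y \<omega> \<in> A} = Y -` A \<inter> space M" by auto
  then show ?thesis using measure_distr[OF Y A] by simp
qed

lemma prok_close:
  fixes X :: "'a \<Rightarrow> real"
  assumes X: "X \<in> borel_measurable M" and Op: "open Op"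
    and null: "prob {\<omega>\<in>space M. X \<omega> \<in> closure Op - Op} = 0" and \<eta>: "0 < \<eta>"
  shows "\<exists>\<delta>>0. \<forall>Y\<in>L0 M. dist_W M Y X < \<delta> \<longrightarrow> Y \<in> borel_measurable M \<and>
        \<bar>prob {\<omega>\<in>space M. Y \<omega> \<in> Op} - prob {\<omega>\<in>space M. X \<omega> \<in> Op}\<bar> \<le> \<eta>"
proof -
  obtain \<epsilon> where \<epsilon>: "\<epsilon> > 0" "prob {\<omega>\<in>space M. X \<omega> \<in> thick Op \<epsilon>} \<le> prob {\<omega>\<in>space M. X \<omega> \<in> Op} + \<eta> / 2"
     "prob {\<omega>\<in>space M. X \<omega> \<in> thick (- Op) \<epsilon>} \<le> prob {\<omega>\<in>space M. X \<omega> \<in> - Op} + \<eta> / 2"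
    using TL2[OF X Op null, of "\<eta> / 2"] \<eta> by auto
  define \<delta> where "\<delta> = min \<epsilon> (\<eta> / 2)"
  have \<delta>: "0 < \<delta>" unfolding \<delta>_def using \<epsilon> \<eta> by simp
  show ?thesis
  proof (rule exI[of _ \<delta>], intro conjI ballI impI \<delta>)
    fix Y assume YL: "Y \<in> L0 M" and dY: "dist_W M Y X < \<delta>"
    then have Y: "Y \<in> borel_measurable M" unfolding L0_def by simp
    show "Y \<in> borel_measurable M" by (rule Y)
    interpret PY: prob_space "distr M borel Y" by (rule prob_space_distr[OF Y])
    interpret PX: prob_space "distr M borel X" by (rule prob_space_distr[OF X])
    define S where "S = {\<epsilon>. \<epsilon> > 0 \<and>
      (\<forall>A\<in>sets borel.
         measure (distr M borel Y) A \<le> measure (distr M borel X) (\<Union>a\<in>A. ball a \<epsilon>) + \<epsilon> \<and>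
         measure (distr M borel X) A \<le> measure (distr M borel Y) (\<Union>a\<in>A. ball a \<epsilon>) + \<epsilon>)}"
    have "1 \<in> S" unfolding S_def
    proof (intro CollectI conjI ballI)
      fix A :: "real set" assume "A \<in> sets borel"
      have "measure (distr M borel Y) A \<le> 1" by (rule PY.prob_le_1)
      then show "measure (distr M borel Y) A \<le> measure (distr M borel X) (\<Union>a\<in>A. ball a 1) + 1"
        using measure_nonneg[of "distr M borel X" "\<Union>a\<in>A. ball a 1"] by linarith
      have "measure (distr M borel X) A \<le> 1" by (rule PX.prob_le_1)
      then show "measure (distr M borel X) A \<le> measure (distr M borel Y) (\<Union>a\<in>A. ball a 1) + 1"
        using measure_nonneg[of "distr M borel Y" "\<Union>a\<in>A. ball a 1"] by linarith
    qed simp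
    then have ne: "S \<noteq> {}" by auto
    have bdd: "bdd_below S" unfolding S_def by (rule bdd_belowI[of _ 0]) auto
    have "Inf S < \<delta>" using dY unfolding dist_W_def prokhorov_def S_def .
    then obtain e' where e': "e' \<in> S" "e' < \<delta>" using cInf_less_iff[OF ne bdd] by auto
    have e'pos: "0 < e'" and e'A: "\<And>A. A \<in> sets borel \<Longrightarrow> measure (distr M borel Y) A \<le> measure (distr M borel X) (thick A e') + e'"
      using e'(1) unfolding S_def thick_def by auto
    have e'e: "e' \<le> \<epsilon>" "e' \<le> \<eta> / 2" using e'(2) unfolding \<delta>_def by auto
    have bO: "Op \<in> sets borel" "- Op \<in> sets borel" using Op by auto
    have up: "prob {\<omega>\<in>space M. Y \<omega> \<in> A} \<le> prob {\<omega>\<in>space M. X \<omega> \<in> thick A \<epsilon>} + \<eta> / 2"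
      if A: "A \<in> sets borel" for A
    proof -
      have "prob {\<omega>\<in>space M. Y \<omega> \<in> A} \<le> prob {\<omega>\<in>space M. X \<omega> \<in> thick A e'} + e'"
        using e'A[OF A] unfolding prob_distr_le[OF Y A] prob_distr_le[OF X borel_open[OF open_thick]] .
      also have "prob {\<omega>\<in>space M. X \<omega> \<in> thick A e'} \<le> prob {\<omega>\<in>space M. X \<omega> \<in> thick A \<epsilon>}"
        by (rule finite_measure_mono) (use thick_mono[OF e'e(1), of A] ev_meas[OF X] open_thick in auto)
      finally show ?thesis using e'e by simp
    qed
    have u1: "prob {\<omega>\<in>space M. Y \<omega> \<in> Op} \<le> prob {\<omega>\<in>space M. X \<omega> \<in> Op} + \<eta>"
      using up[OF bO(1)] \<epsilon>(2) by simp
    have u2: "prob {\<omega>\<in>space M. Y \<omega> \<in> - Op} \<le> prob {\<omega>\<in>space M. X \<omega> \<in> - Op} + \<eta>"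
      using up[OF bO(2)] \<epsilon>(3) by simp
    have cY: "prob {\<omega>\<in>space M. Y \<omega> \<in> - Op} = 1 - prob {\<omega>\<in>space M. Y \<omega> \<in> Op}"
    proof -
      have "{\<omega>\<in>space M. Y \<omega> \<in> - Op} = space M - {\<omega>\<in>space M. Y \<omega> \<in> Op}" by auto
      then show ?thesis using prob_compl[OF ev_meas[OF Y bO(1)]] by simp
    qed
    have cX: "prob {\<omega>\<in>space M. X \<omega> \<in> - Op} = 1 - prob {\<omega>\<in>space M. X \<omega> \<in> Op}"
    proof -
      have "{\<omega>\<in>space M. X \<omega> \<in> - Op} = space M - {\<omega>\<in>space M. X \<omega> \<in> Op}" by auto
      then show ?thesis using prob_compl[OF ev_meas[OF X bO(1)]] by simp
    qed
    show "\<bar>prob {\<omega>\<in>space M. Y \<omega> \<in> Op} - prob {\<omega>\<in>space M. X \<omega> \<in> Op}\<bar> \<le> \<eta>"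
      using u1 u2 cX cY by linarith
  qed
qed

lemma space_close:
  fixes X :: "'a \<Rightarrow> real"
  assumes SC: "space_choice M Z \<pi>" and XZ: "X \<in> Z" and Op: "open Op"
    and null: "prob {\<omega>\<in>space M. X \<omega> \<in> closure Op - Op} = 0" and \<eta>: "0 < \<eta>"
    and X: "X \<in> borel_measurable M"
  shows "\<exists>\<delta>>0. \<forall>Y\<in>Z. \<pi> Y X < \<delta> \<longrightarrow> Y \<in> borel_measurable M \<and>
        \<bar>prob {\<omega>\<in>space M. Y \<omega> \<in> Op} - prob {\<omega>\<in>space M. X \<omega> \<in> Op}\<bar> \<le> \<eta>"
proof -
  from SC consider (lq) "Lq_choice M Z \<pi>" | (w) "Z = L0 M" "\<pi> = dist_W M"
    unfolding space_choice_def Lq_choice_def by blast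
  then show ?thesis
  proof cases
    case lq
    show ?thesis by (rule L1_prob_close[where Z=Z and \<pi>=\<pi>, OF X Op null Lq_choice_props(3)[OF lq XZ] \<eta>])
  next
    case w
    then show ?thesis using prok_close[OF X Op null \<eta>] by simp
  qed
qed

lemma gamma_set_props:
  fixes X :: "'a \<Rightarrow> real" and \<gamma> :: "real \<Rightarrow> real"
  assumes X: "X \<in> borel_measurable M" and \<gamma>c: "continuous_on UNIV \<gamma>"
    and pc: "prob {\<omega>\<in>space M. \<gamma> (X \<omega>) = c} = 0"
  shows "open {x. c < \<gamma> x}" "prob {\<omega>\<in>space M. X \<omega> \<in> closure {x. c < \<gamma> x} - {x. c < \<gamma> x}} = 0"
proof -
  have "open (\<gamma> -` {c<..})" by (rule open_vimage[OF _ \<gamma>c]) auto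
  moreover have "\<gamma> -` {c<..} = {x. c < \<gamma> x}" by auto
  ultimately show op: "open {x. c < \<gamma> x}" by simp
  have cl: "closed {x. c \<le> \<gamma> x}"
  proof -
    have "closed (\<gamma> -` {c..})" by (rule closed_vimage[OF _ \<gamma>c]) auto
    moreover have "\<gamma> -` {c..} = {x. c \<le> \<gamma> x}" by auto
    ultimately show ?thesis by simp
  qed
  have "closure {x. c < \<gamma> x} \<subseteq> {x. c \<le> \<gamma> x}"
    by (rule closure_minimal) (use cl in auto)
  then have sub: "{\<omega>\<in>space M. X \<omega> \<in> closure {x. c < \<gamma> x} - {x. c < \<gamma> x}} \<subseteq> {\<omega>\<in>space M. \<gamma> (X \<omega>) = c}"
    by force
  have \<gamma>m: "\<gamma> \<in> borel_measurable borel" using \<gamma>c by (simp add: borel_measurable_continuous_onI)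
  have "prob {\<omega>\<in>space M. X \<omega> \<in> closure {x. c < \<gamma> x} - {x. c < \<gamma> x}} \<le> prob {\<omega>\<in>space M. \<gamma> (X \<omega>) = c}"
  proof (rule finite_measure_mono[OF sub])
    have gm: "(\<lambda>\<omega>. \<gamma> (X \<omega>)) \<in> borel_measurable M" using X \<gamma>m by measurable
    show "{\<omega>\<in>space M. \<gamma> (X \<omega>) = c} \<in> events" using ev_meas[OF gm, of "{c}"] by simp
  qed
  then show "prob {\<omega>\<in>space M. X \<omega> \<in> closure {x. c < \<gamma> x} - {x. c < \<gamma> x}} = 0"
    using pc measure_nonneg[of M] by (simp add: order_antisym)
qed

lemma part3:
  fixes X :: "'a \<Rightarrow> real" and \<gamma> :: "real \<Rightarrow> real"
  assumes p: "0 < p" "p < 1"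
    and X: "X \<in> borel_measurable M"
    and \<gamma>c: "continuous_on UNIV \<gamma>" and \<gamma>p: "\<forall>x. \<gamma> x > 0"
    and \<gamma>i: "integrable M (\<lambda>\<omega>. \<gamma> (X \<omega>))" and \<gamma>1: "(\<integral>\<omega>. \<gamma> (X \<omega>) \<partial>M) = 1"
    and x0: "0 \<le> x0" "x0 < m"
    and dich: "(\<forall>x y. \<gamma> x = \<gamma> y) \<or> (continuous_on UNIV \<gamma> \<and> (\<forall>t. prob {\<omega>\<in>space M. \<gamma> (X \<omega>) = t} = 0))"
    and SC: "space_choice M Z \<pi>" and XZ: "X \<in> Z"
  shows "robust (ES M p) (G_bd M \<gamma> X x0 m) Z \<pi> X"
proof -
  have \<gamma>m: "\<gamma> \<in> borel_measurable borel" using \<gamma>c by (simp add: borel_measurable_continuous_onI)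
  have Geq: "G_bd M \<gamma> X x0 m = Gset M \<gamma> X x0 (\<lambda>_. m)" unfolding G_bd_def Gset_def by simp
  have m0: "0 \<le> m" using x0 by simp
  have \<gamma>ui: "integrable M (\<lambda>\<omega>. \<gamma> (X \<omega>) * m)" using \<gamma>i by simp
  have x0': "x0 \<le> (\<integral>\<omega>. \<gamma> (X \<omega>) * m \<partial>M)" using \<gamma>1 x0 by simp
  have dich': "(\<forall>x y. \<gamma> x = \<gamma> y) \<or> (\<forall>c. prob {\<omega>\<in>space M. \<gamma> (X \<omega>) = c} = 0)" using dich by auto
  have ex: "\<exists>t s c. 0 \<le> t \<and> 0 \<le> s \<and> s \<le> 1 \<and> prob {\<omega>\<in>space M. \<gamma> (X \<omega>) = c} = 0 \<and>
     (\<lambda>x. min m t + s * max (m - t) 0 * indicator {c<..} (\<gamma> x)) \<in> optimal_set (ES M p) (Gset M \<gamma> X x0 (\<lambda>_. m)) X"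
    by (rule opt_exists[OF p X \<gamma>m \<gamma>p \<gamma>i \<gamma>1, of "\<lambda>_. m" x0]) (use m0 \<gamma>ui x0' dich' in auto)
  then obtain t s c where tsc: "0 \<le> t" "0 \<le> s" "s \<le> 1" "prob {\<omega>\<in>space M. \<gamma> (X \<omega>) = c} = 0"
    and opt: "(\<lambda>x. min m t + s * max (m - t) 0 * indicator {c<..} (\<gamma> x)) \<in> optimal_set (ES M p) (Gset M \<gamma> X x0 (\<lambda>_. m)) X"
    by blast
  define Op where "Op = {x. c < \<gamma> x}"
  have geq: "(\<lambda>x. min m t + s * max (m - t) 0 * indicator {c<..} (\<gamma> x)) = (\<lambda>x. min m t + s * max (m - t) 0 * indicator Op x)"
    unfolding Op_def by (auto simp: indicator_def)
  have Op: "open Op" and null: "prob {\<omega>\<in>space M. X \<omega> \<in> closure Op - Op} = 0"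
    using gamma_set_props[OF X \<gamma>c tsc(4)] unfolding Op_def by auto
  have cont: "cont_at_wrt Z \<pi> (\<lambda>Y. ES M p ((\<lambda>x. min m t + s * max (m - t) 0 * indicator Op x) \<circ> Y)) X"
  proof (rule cont_two_point[OF p X])
    show "Op \<in> sets borel" using Op by auto
    show "0 \<le> s * max (m - t) 0" using tsc by simp
    fix \<eta> :: real assume "0 < \<eta>"
    then show "\<exists>\<delta>>0. \<forall>Y\<in>Z. \<pi> Y X < \<delta> \<longrightarrow> Y \<in> borel_measurable M \<and>
        \<bar>prob {\<omega>\<in>space M. Y \<omega> \<in> Op} - prob {\<omega>\<in>space M. X \<omega> \<in> Op}\<bar> \<le> \<eta>"
      by (rule space_close[OF SC XZ Op null _ X])
  qed
  show ?thesis unfolding robust_def Geq using opt cont unfolding geq by blast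
qed

lemma mis_meas:
  fixes X Y :: "'a \<Rightarrow> real"
  assumes X: "X \<in> borel_measurable M" and Y: "Y \<in> borel_measurable M" and Op: "Op \<in> sets borel"
  shows "{\<omega>\<in>space M. (Y \<omega> \<in> Op) \<noteq> (X \<omega> \<in> Op)} \<in> events"
proof -
  have mX: "{\<omega>\<in>space M. X \<omega> \<in> Op} \<in> events" by (rule ev_meas[OF X Op])
  have mY: "{\<omega>\<in>space M. Y \<omega> \<in> Op} \<in> events" by (rule ev_meas[OF Y Op])
  have "{\<omega>\<in>space M. (Y \<omega> \<in> Op) \<noteq> (X \<omega> \<in> Op)} = ({\<omega>\<in>space M. Y \<omega> \<in> Op} - {\<omega>\<in>space M. X \<omega> \<in> Op}) \<union> ({\<omega>\<in>space M. X \<omega> \<in> Op} - {\<omega>\<in>space M. Y \<omega> \<in> Op})"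
    by auto
  then show ?thesis using mX mY by auto
qed

lemma AC:
  fixes X :: "'a \<Rightarrow> real"
  assumes Xi: "integrable M X" and e: "0 < e"
  shows "\<exists>\<kappa>>0. \<forall>B\<in>events. prob B \<le> \<kappa> \<longrightarrow> (\<integral>\<omega>. \<bar>X \<omega>\<bar> * indicator B \<omega> \<partial>M) \<le> e"
proof -
  have Xm: "X \<in> borel_measurable M" using Xi by auto
  have Xa: "integrable M (\<lambda>\<omega>. \<bar>X \<omega>\<bar>)" using Xi by auto
  define f where "f n = (\<integral>\<omega>. \<bar>X \<omega>\<bar> * indicator {\<omega>\<in>space M. real n < \<bar>X \<omega>\<bar>} \<omega> \<partial>M)" for n :: nat
  have "f \<longlonglongrightarrow> (\<integral>\<omega>. 0 \<partial>M)"
    unfolding f_def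
  proof (rule integral_dominated_convergence[where w="\<lambda>\<omega>. \<bar>X \<omega>\<bar>"])
    show "AE \<omega> in M. (\<lambda>n. \<bar>X \<omega>\<bar> * indicator {\<omega>\<in>space M. real n < \<bar>X \<omega>\<bar>} \<omega>) \<longlonglongrightarrow> 0"
    proof (rule AE_I2)
      fix \<omega>
      obtain N where N: "\<bar>X \<omega>\<bar> < real N" using reals_Archimedean2 by blast
      have "eventually (\<lambda>n. \<bar>X \<omega>\<bar> * indicator {\<omega>\<in>space M. real n < \<bar>X \<omega>\<bar>} \<omega> = 0) sequentially"
        unfolding eventually_sequentially
        by (rule exI[of _ N]) (use N in \<open>auto simp: indicator_def\<close>)
      then show "(\<lambda>n. \<bar>X \<omega>\<bar> * indicator {\<omega>\<in>space M. real n < \<bar>X \<omega>\<bar>} \<omega>) \<longlonglongrightarrow> 0"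
        by (rule tendsto_eventually)
    qed
    show "\<And>i. AE \<omega> in M. norm (\<bar>X \<omega>\<bar> * indicator {\<omega>\<in>space M. real i < \<bar>X \<omega>\<bar>} \<omega>) \<le> \<bar>X \<omega>\<bar>"
      by (auto simp: indicator_def)
  qed (use Xm Xa in auto)
  then have "eventually (\<lambda>n. f n < e / 2) sequentially"
    using e by (intro order_tendstoD(2)) auto
  then obtain n where n: "f n < e / 2" unfolding eventually_sequentially by auto
  define \<kappa> where "\<kappa> = e / (2 * (real n + 1))"
  have \<kappa>: "0 < \<kappa>" unfolding \<kappa>_def using e by simp
  show ?thesis
  proof (rule exI[of _ \<kappa>], intro conjI ballI impI \<kappa>)
    fix B assume B: "B \<in> events" and pB: "prob B \<le> \<kappa>"
    define S where "S = {\<omega>\<in>space M. real n < \<bar>X \<omega>\<bar>}"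
    have Sm: "S \<in> events" unfolding S_def using Xm by measurable
    have i1: "integrable M (\<lambda>\<omega>. \<bar>X \<omega>\<bar> * indicator B \<omega>)"
      by (rule int_dom[OF Xa]) (use B Xm in \<open>auto simp: indicator_def\<close>)
    have i2: "integrable M (\<lambda>\<omega>. real n * indicator B \<omega> + \<bar>X \<omega>\<bar> * indicator S \<omega>)"
    proof (rule Bochner_Integration.integrable_add)
      show "integrable M (\<lambda>\<omega>. real n * indicator B \<omega>)" using B by (simp add: less_top[symmetric])
      show "integrable M (\<lambda>\<omega>. \<bar>X \<omega>\<bar> * indicator S \<omega>)"
        by (rule int_dom[OF Xa]) (use Sm Xm in \<open>auto simp: indicator_def\<close>)
    qed
    have "(\<integral>\<omega>. \<bar>X \<omega>\<bar> * indicator B \<omega> \<partial>M) \<le> (\<integral>\<omega>. real n * indicator B \<omega> + \<bar>X \<omega>\<bar> * indicator S \<omega> \<partial>M)"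
      by (rule integral_mono[OF i1 i2]) (auto simp: indicator_def S_def)
    also have "\<dots> = real n * prob B + f n"
    proof -
      have "integrable M (\<lambda>\<omega>. \<bar>X \<omega>\<bar> * indicator S \<omega>)"
        by (rule int_dom[OF Xa]) (use Sm Xm in \<open>auto simp: indicator_def\<close>)
      then show ?thesis unfolding f_def S_def[symmetric] using B by (simp add: less_top[symmetric])
    qed
    also have "real n * prob B \<le> real n * \<kappa>" using pB by (intro mult_left_mono) auto
    also have "real n * \<kappa> \<le> e / 2"
    proof -
      have "real n * \<kappa> \<le> (real n + 1) * \<kappa>" using \<kappa> by (intro mult_right_mono) auto
      also have "\<dots> = e / 2" unfolding \<kappa>_def by (simp add: field_simps)
      finally show ?thesis .
    qed
    finally show "(\<integral>\<omega>. \<bar>X \<omega>\<bar> * indicator B \<omega> \<partial>M) \<le> e" using n by simp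
  qed
qed

lemma cont_ii:
  fixes X :: "'a \<Rightarrow> real" and g :: "real \<Rightarrow> real"
  assumes p: "0 < p" "p < 1" and X: "X \<in> borel_measurable M" and Xi: "integrable M X"
    and t: "0 \<le> t" and s: "0 \<le> s" "s \<le> 1" and Op: "open Op"
    and null: "prob {\<omega>\<in>space M. X \<omega> \<in> closure Op - Op} = 0"
    and L1: "\<And>e. 0 < e \<Longrightarrow> \<exists>\<delta>>0. \<forall>Y\<in>Z. \<pi> Y X < \<delta> \<longrightarrow> Y \<in> borel_measurable M \<and>
       integrable M (\<lambda>\<omega>. \<bar>Y \<omega> - X \<omega>\<bar>) \<and> (\<integral>\<omega>. \<bar>Y \<omega> - X \<omega>\<bar> \<partial>M) \<le> e"
    and g_def: "g = (\<lambda>x. min x t + s * max (x - t) 0 * indicator Op x)"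
  shows "cont_at_wrt Z \<pi> (\<lambda>Y. ES M p (g \<circ> Y)) X"
proof -
  have bO: "Op \<in> sets borel" using Op by auto
  have gm: "g \<in> borel_measurable borel" unfolding g_def using bO by measurable
  have gXm: "g \<circ> X \<in> borel_measurable M" using gm X by measurable
  have Xa: "integrable M (\<lambda>\<omega>. \<bar>X \<omega>\<bar>)" using Xi by auto
  have gle: "max (g x) 0 \<le> \<bar>x\<bar>" for x
  proof -
    define a where "a = s * max (x - t) 0 * indicator Op x"
    have a: "a \<le> max (x - t) 0" unfolding a_def
      using s by (auto simp: indicator_def intro!: mult_left_le_one_le)
    have gx: "g x = min x t + a" unfolding g_def a_def by simp
    have "min x t + max (x - t) 0 = x" by (auto simp: min_def max_def)
    then have "g x \<le> x" using a gx by linarith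
    then show ?thesis by simp
  qed
  have PX: "posint M (g \<circ> X)" unfolding posint_def
  proof (rule int_dom[OF Xa])
    show "(\<lambda>\<omega>. max ((g \<circ> X) \<omega>) 0) \<in> borel_measurable M" using gm X by measurable
    show "AE \<omega> in M. \<bar>max ((g \<circ> X) \<omega>) 0\<bar> \<le> \<bar>X \<omega>\<bar>" using gle by simp
  qed
  obtain z where z: "ES M p (g \<circ> X) = ereal z" using ES_posint[OF gXm p PX] by blast
  show ?thesis
  proof (rule cont_from_bounds[where F="\<lambda>Y. ES M p (g \<circ> Y)", OF z])
    fix e :: real assume e: "0 < e"
    define e1 where "e1 = e / 2 * (1 - p)"
    have e1: "0 < e1" unfolding e1_def using e p by simp
    obtain \<kappa> where \<kappa>: "\<kappa> > 0" "\<forall>B\<in>events. prob B \<le> \<kappa> \<longrightarrow> (\<integral>\<omega>. \<bar>X \<omega>\<bar> * indicator B \<omega> \<partial>M) \<le> e1 / 2"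
      using AC[OF Xi, of "e1 / 2"] e1 by auto
    obtain \<epsilon> where \<epsilon>: "\<epsilon> > 0" "prob {\<omega>\<in>space M. X \<omega> \<in> thick Op \<epsilon>} \<le> prob {\<omega>\<in>space M. X \<omega> \<in> Op} + \<kappa> / 4"
       "prob {\<omega>\<in>space M. X \<omega> \<in> thick (- Op) \<epsilon>} \<le> prob {\<omega>\<in>space M. X \<omega> \<in> - Op} + \<kappa> / 4"
      using TL2[OF X Op null, of "\<kappa> / 4"] \<kappa> by auto
    obtain \<delta> where \<delta>: "\<delta> > 0" "\<forall>Y\<in>Z. \<pi> Y X < \<delta> \<longrightarrow> Y \<in> borel_measurable M \<and>
       integrable M (\<lambda>\<omega>. \<bar>Y \<omega> - X \<omega>\<bar>) \<and> (\<integral>\<omega>. \<bar>Y \<omega> - X \<omega>\<bar> \<partial>M) \<le> min (\<epsilon> * (\<kappa> / 2)) (e1 / 4)"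
      using L1[of "min (\<epsilon> * (\<kappa> / 2)) (e1 / 4)"] \<epsilon> \<kappa> e1 by auto
    show "\<exists>\<delta>>0. \<forall>Y\<in>Z. \<pi> Y X < \<delta> \<longrightarrow> (\<exists>y. ES M p (g \<circ> Y) = ereal y \<and> \<bar>y - z\<bar> < e)"
    proof (rule exI[of _ \<delta>], intro conjI ballI impI \<delta>(1))
      fix Y assume "Y \<in> Z" "\<pi> Y X < \<delta>"
      then have Y: "Y \<in> borel_measurable M" and i: "integrable M (\<lambda>\<omega>. \<bar>Y \<omega> - X \<omega>\<bar>)"
        and b: "(\<integral>\<omega>. \<bar>Y \<omega> - X \<omega>\<bar> \<partial>M) \<le> min (\<epsilon> * (\<kappa> / 2)) (e1 / 4)" using \<delta>(2) by auto
      have gYm: "g \<circ> Y \<in> borel_measurable M" using gm Y by measurable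
      define mis where "mis = {\<omega>\<in>space M. (Y \<omega> \<in> Op) \<noteq> (X \<omega> \<in> Op)}"
      have mism: "mis \<in> events" unfolding mis_def by (rule mis_meas[OF X Y bO])
      have mk: "prob {\<omega>\<in>space M. \<epsilon> \<le> \<bar>Y \<omega> - X \<omega>\<bar>} \<le> (\<integral>\<omega>. \<bar>Y \<omega> - X \<omega>\<bar> \<partial>M) / \<epsilon>"
        by (rule integral_Markov_inequality_measure[OF i _ _ \<epsilon>(1), of "space M"]) auto
      also have "\<dots> \<le> \<epsilon> * (\<kappa> / 2) / \<epsilon>" by (rule divide_right_mono) (use b \<epsilon> in auto)
      also have "\<dots> = \<kappa> / 2" using \<epsilon> by simp
      finally have mk': "prob {\<omega>\<in>space M. \<epsilon> \<le> \<bar>Y \<omega> - X \<omega>\<bar>} \<le> \<kappa> / 2" .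
      have "prob mis \<le> prob {\<omega>\<in>space M. \<epsilon> \<le> \<bar>Y \<omega> - X \<omega>\<bar>} + 2 * (\<kappa> / 4)"
        unfolding mis_def by (rule MIS[OF X Y Op \<epsilon>(1) \<epsilon>(2) \<epsilon>(3)])
      then have pmis: "prob mis \<le> \<kappa>" using mk' by simp
      have Xmis: "(\<integral>\<omega>. \<bar>X \<omega>\<bar> * indicator mis \<omega> \<partial>M) \<le> e1 / 2" using \<kappa>(2) mism pmis by blast
      define D where "D = (\<lambda>\<omega>. \<bar>(g \<circ> Y) \<omega> - (g \<circ> X) \<omega>\<bar>)"
      have Dm: "D \<in> borel_measurable M" unfolding D_def using gYm gXm by measurable
      have Dle: "D \<omega> \<le> 2 * \<bar>Y \<omega> - X \<omega>\<bar> + \<bar>X \<omega>\<bar> * indicator mis \<omega>" if "\<omega> \<in> space M" for \<omega>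
      proof -
        have i: "indicator mis \<omega> = (if (Y \<omega> \<in> Op) \<noteq> (X \<omega> \<in> Op) then 1 else (0::real))"
          using that unfolding mis_def by (auto simp: indicator_def)
        have e1: "D \<omega> = \<bar>(min (Y \<omega>) t + s * max (Y \<omega> - t) 0 * indicator Op (Y \<omega>)) - (min (X \<omega>) t + s * max (X \<omega> - t) 0 * indicator Op (X \<omega>))\<bar>"
          unfolding D_def g_def comp_def ..
        show ?thesis unfolding e1 i by (rule pw4[OF t s])
      qed
      have iB: "integrable M (\<lambda>\<omega>. 2 * \<bar>Y \<omega> - X \<omega>\<bar> + \<bar>X \<omega>\<bar> * indicator mis \<omega>)"
      proof (rule Bochner_Integration.integrable_add)
        show "integrable M (\<lambda>\<omega>. 2 * \<bar>Y \<omega> - X \<omega>\<bar>)" using i by simp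
        show "integrable M (\<lambda>\<omega>. \<bar>X \<omega>\<bar> * indicator mis \<omega>)"
          by (rule int_dom[OF Xa]) (use mism X in \<open>auto simp: indicator_def\<close>)
      qed
      have Dle': "AE \<omega> in M. \<bar>D \<omega>\<bar> \<le> 2 * \<bar>Y \<omega> - X \<omega>\<bar> + \<bar>X \<omega>\<bar> * indicator mis \<omega>"
        using AE_space
      proof eventually_elim
        case (elim \<omega>)
        show ?case using Dle[OF elim] by (simp add: D_def)
      qed
      have iD: "integrable M D" by (rule int_dom[OF iB Dm Dle'])
      have "(\<integral>\<omega>. D \<omega> \<partial>M) \<le> (\<integral>\<omega>. 2 * \<bar>Y \<omega> - X \<omega>\<bar> + \<bar>X \<omega>\<bar> * indicator mis \<omega> \<partial>M)"
        by (rule integral_mono_AE[OF iD iB]) (use Dle' in \<open>eventually_elim, simp add: D_def\<close>)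
      also have "\<dots> = 2 * (\<integral>\<omega>. \<bar>Y \<omega> - X \<omega>\<bar> \<partial>M) + (\<integral>\<omega>. \<bar>X \<omega>\<bar> * indicator mis \<omega> \<partial>M)"
      proof -
        have "integrable M (\<lambda>\<omega>. \<bar>X \<omega>\<bar> * indicator mis \<omega>)"
          by (rule int_dom[OF Xa]) (use mism X in \<open>auto simp: indicator_def\<close>)
        then show ?thesis using i by simp
      qed
      also have "\<dots> \<le> 2 * (e1 / 4) + e1 / 2" using b Xmis by simp
      finally have intD: "(\<integral>\<omega>. D \<omega> \<partial>M) \<le> e1" by simp
      have iD': "integrable M (\<lambda>\<omega>. \<bar>(g \<circ> Y) \<omega> - (g \<circ> X) \<omega>\<bar>)" using iD unfolding D_def .
      have iD'': "integrable M (\<lambda>\<omega>. \<bar>(g \<circ> X) \<omega> - (g \<circ> Y) \<omega>\<bar>)" using iD unfolding D_def by (simp add: abs_minus_commute)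
      have PY: "posint M (g \<circ> Y)" by (rule jr_coupling(1)[OF gYm gXm iD' PX p(2)])
      have c1: "ES M p (g \<circ> Y) \<le> ES M p (g \<circ> X) + ereal ((\<integral>\<omega>. D \<omega> \<partial>M) / (1 - p))"
        by (rule ES_compare[OF gYm gXm p PY PX]) (use jr_coupling(2)[OF gYm gXm iD' PX p(2)] in \<open>simp add: D_def comp_def\<close>)
      have c2: "ES M p (g \<circ> X) \<le> ES M p (g \<circ> Y) + ereal ((\<integral>\<omega>. D \<omega> \<partial>M) / (1 - p))"
        by (rule ES_compare[OF gXm gYm p PX PY]) (use jr_coupling(2)[OF gXm gYm iD'' PY p(2)] in \<open>simp add: D_def comp_def abs_minus_commute\<close>)
      obtain y where y: "ES M p (g \<circ> Y) = ereal y" using ES_posint[OF gYm p PY] by blast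
      have yz: "\<bar>y - z\<bar> \<le> (\<integral>\<omega>. D \<omega> \<partial>M) / (1 - p)" using c1 c2 y z by auto
      have "(\<integral>\<omega>. D \<omega> \<partial>M) / (1 - p) \<le> e1 / (1 - p)" by (rule divide_right_mono[OF intD]) (use p in auto)
      also have "e1 / (1 - p) = e / 2" unfolding e1_def using p by (subst nonzero_mult_div_cancel_right) auto
      finally have fD: "(\<integral>\<omega>. D \<omega> \<partial>M) / (1 - p) \<le> e / 2" .
      have "\<bar>y - z\<bar> < e" using yz fD e by linarith
      then show "\<exists>y. ES M p (g \<circ> Y) = ereal y \<and> \<bar>y - z\<bar> < e" using y by blast
    qed
  qed
qed

lemma part2:
  fixes X :: "'a \<Rightarrow> real" and \<gamma> :: "real \<Rightarrow> real"
  assumes p: "0 < p" "p < 1"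
    and X: "X \<in> borel_measurable M" and X0: "\<forall>\<omega>\<in>space M. X \<omega> \<ge> 0"
    and \<gamma>c: "continuous_on UNIV \<gamma>" and \<gamma>p: "\<forall>x. \<gamma> x > 0"
    and \<gamma>i: "integrable M (\<lambda>\<omega>. \<gamma> (X \<omega>))" and \<gamma>1: "(\<integral>\<omega>. \<gamma> (X \<omega>) \<partial>M) = 1"
    and \<gamma>Xi: "integrable M (\<lambda>\<omega>. \<gamma> (X \<omega>) * X \<omega>)"
    and x0: "x0 < (\<integral>\<omega>. \<gamma> (X \<omega>) * X \<omega> \<partial>M)"
    and dich: "(\<forall>x y. \<gamma> x = \<gamma> y) \<or> (continuous_on UNIV \<gamma> \<and> (\<forall>t. prob {\<omega>\<in>space M. \<gamma> (X \<omega>) = t} = 0))"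
    and LZ: "Lq_choice M Z \<pi>" and XZ: "X \<in> Z"
  shows "robust (ES M p) (G_ns M \<gamma> X x0) Z \<pi> X"
proof -
  have \<gamma>m: "\<gamma> \<in> borel_measurable borel" using \<gamma>c by (simp add: borel_measurable_continuous_onI)
  have Geq: "G_ns M \<gamma> X x0 = Gset M \<gamma> X x0 (\<lambda>x. x)" unfolding G_ns_def Gset_def by simp
  have Xi: "integrable M X" by (rule Lq_choice_props(2)[OF LZ XZ])
  have x0': "x0 \<le> (\<integral>\<omega>. \<gamma> (X \<omega>) * X \<omega> \<partial>M)" using x0 by simp
  have dich': "(\<forall>x y. \<gamma> x = \<gamma> y) \<or> (\<forall>c. prob {\<omega>\<in>space M. \<gamma> (X \<omega>) = c} = 0)" using dich by auto
  have ex: "\<exists>t s c. 0 \<le> t \<and> 0 \<le> s \<and> s \<le> 1 \<and> prob {\<omega>\<in>space M. \<gamma> (X \<omega>) = c} = 0 \<and>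
     (\<lambda>x. min x t + s * max (x - t) 0 * indicator {c<..} (\<gamma> x)) \<in> optimal_set (ES M p) (Gset M \<gamma> X x0 (\<lambda>x. x)) X"
    by (rule opt_exists[OF p X \<gamma>m \<gamma>p \<gamma>i \<gamma>1, of "\<lambda>x. x" x0]) (use X0 Xi \<gamma>Xi x0' dich' in auto)
  then obtain t s c where tsc: "0 \<le> t" "0 \<le> s" "s \<le> 1" "prob {\<omega>\<in>space M. \<gamma> (X \<omega>) = c} = 0"
    and opt: "(\<lambda>x. min x t + s * max (x - t) 0 * indicator {c<..} (\<gamma> x)) \<in> optimal_set (ES M p) (Gset M \<gamma> X x0 (\<lambda>x. x)) X"
    by blast
  define Op where "Op = {x. c < \<gamma> x}"
  have geq: "(\<lambda>x. min x t + s * max (x - t) 0 * indicator {c<..} (\<gamma> x)) = (\<lambda>x. min x t + s * max (x - t) 0 * indicator Op x)"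
    unfolding Op_def by (auto simp: indicator_def)
  have Op: "open Op" and null: "prob {\<omega>\<in>space M. X \<omega> \<in> closure Op - Op} = 0"
    using gamma_set_props[OF X \<gamma>c tsc(4)] unfolding Op_def by auto
  have cont: "cont_at_wrt Z \<pi> (\<lambda>Y. ES M p ((\<lambda>x. min x t + s * max (x - t) 0 * indicator Op x) \<circ> Y)) X"
    by (rule cont_ii[where Z=Z and \<pi>=\<pi>, OF p X Xi tsc(1-3) Op null Lq_choice_props(3)[OF LZ XZ] refl])
  show ?thesis unfolding robust_def Geq using opt cont unfolding geq by blast
qed

end

theorem theorem2:
  fixes M :: "'a measure" and X :: "'a \<Rightarrow> real" and \<gamma> :: "real \<Rightarrow> real"
    and p x0 m :: real
  assumes prob: "prob_space M" and atoml: "atomless M"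
    and p: "0 < p" "p < 1"
    and X_meas: "X \<in> borel_measurable M"
    and X_nonneg: "\<forall>\<omega>\<in>space M. X \<omega> \<ge> 0"
    and X_dens: "pos_density_on_support M X"
    and \<gamma>_cont: "continuous_on UNIV \<gamma>"
    and \<gamma>_pos: "\<forall>x. \<gamma> x > 0"
    and \<gamma>_int: "integrable M (\<lambda>\<omega>. \<gamma> (X \<omega>))"
    and \<gamma>_mean: "(\<integral>\<omega>. \<gamma> (X \<omega>) \<partial>M) = 1"
    and \<gamma>X_int: "integrable M (\<lambda>\<omega>. \<gamma> (X \<omega>) * X \<omega>)"
    and m_pos: "m > 0"
  shows
    "(esssup M (\<lambda>\<omega>. ereal (\<gamma> (X \<omega>))) \<le> ereal (1 / (1 - p)) \<longrightarrow>
        (\<forall>Z \<pi>. space_choice M Z \<pi> \<and> X \<in> Z \<longrightarrow>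
           robust (ES M p) (G_cm M \<gamma> X x0) Z \<pi> X))
   \<and> (0 \<le> x0 \<and> x0 < (\<integral>\<omega>. \<gamma> (X \<omega>) * X \<omega> \<partial>M) \<and>
      ((\<forall>x y. \<gamma> x = \<gamma> y) \<or>
       (continuous_on UNIV \<gamma> \<and> (\<forall>t. measure M {\<omega>\<in>space M. \<gamma> (X \<omega>) = t} = 0))) \<longrightarrow>
        (\<forall>Z \<pi>. Lq_choice M Z \<pi> \<and> X \<in> Z \<longrightarrow>
           robust (ES M p) (G_ns M \<gamma> X x0) Z \<pi> X))
   \<and> (0 \<le> x0 \<and> x0 < m \<and>
      ((\<forall>x y. \<gamma> x = \<gamma> y) \<or>
       (continuous_on UNIV \<gamma> \<and> (\<forall>t. measure M {\<omega>\<in>space M. \<gamma> (X \<omega>) = t} = 0))) \<longrightarrow>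
        (\<forall>Z \<pi>. space_choice M Z \<pi> \<and> X \<in> Z \<longrightarrow>
           robust (ES M p) (G_bd M \<gamma> X x0 m) Z \<pi> X))"
proof -
  interpret prob_space M by (rule prob)
  show ?thesis
  proof (intro conjI impI allI)
    fix Z \<pi>
    assume ess: "esssup M (\<lambda>\<omega>. ereal (\<gamma> (X \<omega>))) \<le> ereal (1 / (1 - p))"
    show "robust (ES M p) (G_cm M \<gamma> X x0) Z \<pi> X"
      by (rule part1[OF p X_meas \<gamma>_cont \<gamma>_pos \<gamma>_int \<gamma>_mean ess])
  next
    fix Z \<pi>
    assume H: "0 \<le> x0 \<and> x0 < (\<integral>\<omega>. \<gamma> (X \<omega>) * X \<omega> \<partial>M) \<and>
      ((\<forall>x y. \<gamma> x = \<gamma> y) \<or>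
       (continuous_on UNIV \<gamma> \<and> (\<forall>t. measure M {\<omega>\<in>space M. \<gamma> (X \<omega>) = t} = 0)))"
      and ZZ: "Lq_choice M Z \<pi> \<and> X \<in> Z"
    show "robust (ES M p) (G_ns M \<gamma> X x0) Z \<pi> X"
      by (rule part2[OF p X_meas X_nonneg \<gamma>_cont \<gamma>_pos \<gamma>_int \<gamma>_mean \<gamma>X_int]) (use H ZZ in auto)
  next
    fix Z \<pi>
    assume H: "0 \<le> x0 \<and> x0 < m \<and>
      ((\<forall>x y. \<gamma> x = \<gamma> y) \<or>
       (continuous_on UNIV \<gamma> \<and> (\<forall>t. measure M {\<omega>\<in>space M. \<gamma> (X \<omega>) = t} = 0)))"
      and ZZ: "space_choice M Z \<pi> \<and> X \<in> Z"
    show "robust (ES M p) (G_bd M \<gamma> X x0 m) Z \<pi> X"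
      by (rule part3[OF p X_meas \<gamma>_cont \<gamma>_pos \<gamma>_int \<gamma>_mean]) (use H ZZ in auto)
  qed
qed

end
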